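(* Let $R$ be an associative ring with identity and $M$ a left $R$-module which is projective in $\sigma[M]$. Let $SP(M)=\{N\in\Lambda^{fi}(M)\mid N\text{ is semiprime in }M\}\cup\{M\}$, ordered by inclusion. Then $SP(M)$ is a frame. Moreover, $SP(M)\cong\mathcal{O}(LgSpec(M))$ canonically as frames.
   Context: $\Lambda^{fi}(M)$ is the set of fully invariant submodules of $M$. For $N,L\leq M$, $N_ML=\sum\{f(N)\mid f\in\mathrm{Hom}_R(M,L)\}$. A submodule $N\in\Lambda^{fi}(M)$ with $N\neq M$ is semiprime in $M$ if whenever $K\in\Lambda^{fi}(M)$ and $K_MK\subseteq N$, then $K\subseteq N$. $LgSpec(M)$ is the set of submodules $P\neq M$ such that for all $N,L\in\Lambda^{fi}(M)$, $N_ML\subseteq P$ implies $N\subseteq P$ or $L\subseteq P$, with topology whose open sets are $\mathcal{U}(N)=\{P\in LgSpec(M)\mid N\nsubseteq P\}$, $N\in\Lambda^{fi}(M)$; $\mathcal{O}(LgSpec(M))$ is its frame of open sets. A frame is a complete lattice in which finite meets distribute over arbitrary joins. *)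

theory Defs
  imports "HOL-Algebra.Module" "HOL-Algebra.Complete_Lattice" "HOL-Analysis.Abstract_Topology"
begin

text \<open>HOL-Algebra's locale module requires a commutative ring, so we state the
  left-module axioms directly, over an arbitrary associative unital ring R.\<close>

definition left_module :: "'r ring \<Rightarrow> ('r, 'a) module \<Rightarrow> bool" where
  "left_module R M \<longleftrightarrow> ring R \<and> abelian_group M \<and>
    (\<forall>a\<in>carrier R. \<forall>x\<in>carrier M. a \<odot>\<^bsub>M\<^esub> x \<in> carrier M) \<and>
    (\<forall>a\<in>carrier R. \<forall>b\<in>carrier R. \<forall>x\<in>carrier M.
        (a \<oplus>\<^bsub>R\<^esub> b) \<odot>\<^bsub>M\<^esub> x = a \<odot>\<^bsub>M\<^esub> x \<oplus>\<^bsub>M\<^esub> b \<odot>\<^bsub>M\<^esub> x) \<and>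
    (\<forall>a\<in>carrier R. \<forall>x\<in>carrier M. \<forall>y\<in>carrier M.
        a \<odot>\<^bsub>M\<^esub> (x \<oplus>\<^bsub>M\<^esub> y) = a \<odot>\<^bsub>M\<^esub> x \<oplus>\<^bsub>M\<^esub> a \<odot>\<^bsub>M\<^esub> y) \<and>
    (\<forall>a\<in>carrier R. \<forall>b\<in>carrier R. \<forall>x\<in>carrier M.
        (a \<otimes>\<^bsub>R\<^esub> b) \<odot>\<^bsub>M\<^esub> x = a \<odot>\<^bsub>M\<^esub> (b \<odot>\<^bsub>M\<^esub> x)) \<and>
    (\<forall>x\<in>carrier M. \<one>\<^bsub>R\<^esub> \<odot>\<^bsub>M\<^esub> x = x)"

definition mod_hom :: "'r ring \<Rightarrow> ('r, 'a) module \<Rightarrow> ('r, 'b) module \<Rightarrow> ('a \<Rightarrow> 'b) set" where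
  "mod_hom R M N = {f. f \<in> carrier M \<rightarrow> carrier N \<and>
     (\<forall>x\<in>carrier M. \<forall>y\<in>carrier M. f (x \<oplus>\<^bsub>M\<^esub> y) = f x \<oplus>\<^bsub>N\<^esub> f y) \<and>
     (\<forall>a\<in>carrier R. \<forall>x\<in>carrier M. f (a \<odot>\<^bsub>M\<^esub> x) = a \<odot>\<^bsub>N\<^esub> f x)}"

definition submod_sum :: "'r ring \<Rightarrow> ('r, 'a) module \<Rightarrow> 'a set set \<Rightarrow> 'a set" where
  "submod_sum R M S = \<Inter>{K. submodule K R M \<and> \<Union>S \<subseteq> K}"

definition generated_by :: "'r ring \<Rightarrow> ('r, 'a) module \<Rightarrow> ('r, 'b) module \<Rightarrow> bool" where
  "generated_by R M X \<longleftrightarrow> left_module R X \<and>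
     carrier X = submod_sum R X {f ` carrier M | f. f \<in> mod_hom R M X}"

definition in_sigma :: "'r ring \<Rightarrow> ('r, 'a) module \<Rightarrow> ('r, 'b) module \<Rightarrow> bool" where
  "in_sigma R M N \<longleftrightarrow> left_module R N \<and>
     (\<exists>X :: ('r, 'b) module. generated_by R M X \<and>
        (\<exists>g \<in> mod_hom R N X. inj_on g (carrier N)))"

text \<open>M is projective in sigma[M], testing against modules of sigma[M] whose carriers live in
  the type 'b.\<close>

definition projective_in_sigma :: "'r ring \<Rightarrow> ('r, 'a) module \<Rightarrow> 'b itself \<Rightarrow> bool" where
  "projective_in_sigma R M (T :: 'b itself) \<longleftrightarrow>
     (\<forall>(A :: ('r, 'b) module) (B :: ('r, 'b) module). in_sigma R M A \<longrightarrow> in_sigma R M B \<longrightarrow>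
        (\<forall>g \<in> mod_hom R A B. g ` carrier A = carrier B \<longrightarrow>
          (\<forall>f \<in> mod_hom R M B. \<exists>h \<in> mod_hom R M A. \<forall>x\<in>carrier M. g (h x) = f x)))"

definition fully_invariant :: "'r ring \<Rightarrow> ('r, 'a) module \<Rightarrow> 'a set \<Rightarrow> bool" where
  "fully_invariant R M N \<longleftrightarrow> submodule N R M \<and> (\<forall>f \<in> mod_hom R M M. f ` N \<subseteq> N)"

definition Lambda_fi :: "'r ring \<Rightarrow> ('r, 'a) module \<Rightarrow> 'a set set" where
  "Lambda_fi R M = {N. fully_invariant R M N}"

text \<open>Hom_R(M, L) for a submodule L of M: endomorphisms of M with image inside L.\<close>

definition hom_into :: "'r ring \<Rightarrow> ('r, 'a) module \<Rightarrow> 'a set \<Rightarrow> ('a \<Rightarrow> 'a) set" where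
  "hom_into R M L = {f \<in> mod_hom R M M. f ` carrier M \<subseteq> L}"

text \<open>N_M L = sum of f(N), f in Hom_R(M, L).\<close>

definition prodM :: "'r ring \<Rightarrow> ('r, 'a) module \<Rightarrow> 'a set \<Rightarrow> 'a set \<Rightarrow> 'a set" where
  "prodM R M N L = submod_sum R M {f ` N | f. f \<in> hom_into R M L}"

definition semiprime_in :: "'r ring \<Rightarrow> ('r, 'a) module \<Rightarrow> 'a set \<Rightarrow> bool" where
  "semiprime_in R M N \<longleftrightarrow> N \<in> Lambda_fi R M \<and> N \<noteq> carrier M \<and>
     (\<forall>K \<in> Lambda_fi R M. prodM R M K K \<subseteq> N \<longrightarrow> K \<subseteq> N)"

definition SP :: "'r ring \<Rightarrow> ('r, 'a) module \<Rightarrow> 'a set set" where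
  "SP R M = {N. semiprime_in R M N} \<union> {carrier M}"

definition LgSpec :: "'r ring \<Rightarrow> ('r, 'a) module \<Rightarrow> 'a set set" where
  "LgSpec R M = {P. submodule P R M \<and> P \<noteq> carrier M \<and>
     (\<forall>N \<in> Lambda_fi R M. \<forall>L \<in> Lambda_fi R M. prodM R M N L \<subseteq> P \<longrightarrow> N \<subseteq> P \<or> L \<subseteq> P)}"

definition Uopen :: "'r ring \<Rightarrow> ('r, 'a) module \<Rightarrow> 'a set \<Rightarrow> 'a set set" where
  "Uopen R M N = {P \<in> LgSpec R M. \<not> N \<subseteq> P}"

definition LgOpens :: "'r ring \<Rightarrow> ('r, 'a) module \<Rightarrow> 'a set set set" where
  "LgOpens R M = {Uopen R M N | N. N \<in> Lambda_fi R M}"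

definition incl_order :: "'x set set \<Rightarrow> 'x set gorder" where
  "incl_order S = \<lparr>carrier = S, eq = (=), le = (\<subseteq>)\<rparr>"

definition frame :: "'x gorder \<Rightarrow> bool" where
  "frame L \<longleftrightarrow> complete_lattice L \<and>
     (\<forall>x\<in>carrier L. \<forall>A. A \<subseteq> carrier L \<longrightarrow>
        x \<sqinter>\<^bsub>L\<^esub> (\<Squnion>\<^bsub>L\<^esub> A) = \<Squnion>\<^bsub>L\<^esub> ((\<lambda>a. x \<sqinter>\<^bsub>L\<^esub> a) ` A))"

definition frame_iso :: "'x gorder \<Rightarrow> 'y gorder \<Rightarrow> ('x \<Rightarrow> 'y) \<Rightarrow> bool" where
  "frame_iso L K f \<longleftrightarrow> frame L \<and> frame K \<and> bij_betw f (carrier L) (carrier K) \<and>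
     sup_pres L K f \<and> meet_pres L K f \<and> f \<top>\<^bsub>L\<^esub> = \<top>\<^bsub>K\<^esub>"

end

theory Submission
  imports Defs
begin


lemma submoduleI':
  fixes M :: "('r,'a) module"
  assumes "H \<subseteq> carrier M" "\<zero>\<^bsub>M\<^esub> \<in> H"
    "\<And>x y. x \<in> H \<Longrightarrow> y \<in> H \<Longrightarrow> x \<oplus>\<^bsub>M\<^esub> y \<in> H"
    "\<And>x. x \<in> H \<Longrightarrow> \<ominus>\<^bsub>M\<^esub> x \<in> H"
    "\<And>a x. a \<in> carrier R \<Longrightarrow> x \<in> H \<Longrightarrow> a \<odot>\<^bsub>M\<^esub> x \<in> H"
  shows "submodule H R M"
  using assms unfolding submodule_def subgroup_def submodule_axioms_def a_inv_def
  by auto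

lemma submoduleD:
  fixes M :: "('r,'a) module"
  assumes "submodule H R M"
  shows "H \<subseteq> carrier M" "\<zero>\<^bsub>M\<^esub> \<in> H"
    "\<And>x y. x \<in> H \<Longrightarrow> y \<in> H \<Longrightarrow> x \<oplus>\<^bsub>M\<^esub> y \<in> H"
    "\<And>x. x \<in> H \<Longrightarrow> \<ominus>\<^bsub>M\<^esub> x \<in> H"
    "\<And>a x. a \<in> carrier R \<Longrightarrow> x \<in> H \<Longrightarrow> a \<odot>\<^bsub>M\<^esub> x \<in> H"
  using assms unfolding submodule_def subgroup_def submodule_axioms_def a_inv_def
  by auto

definition ilub :: "'x set set \<Rightarrow> 'x set set \<Rightarrow> 'x set \<Rightarrow> bool" where
  "ilub S A s \<longleftrightarrow> s \<in> S \<and> (\<forall>a\<in>A. a \<subseteq> s) \<and> (\<forall>u\<in>S. (\<forall>a\<in>A. a \<subseteq> u) \<longrightarrow> s \<subseteq> u)"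

definition iglb :: "'x set set \<Rightarrow> 'x set set \<Rightarrow> 'x set \<Rightarrow> bool" where
  "iglb S A s \<longleftrightarrow> s \<in> S \<and> (\<forall>a\<in>A. s \<subseteq> a) \<and> (\<forall>u\<in>S. (\<forall>a\<in>A. u \<subseteq> a) \<longrightarrow> u \<subseteq> s)"

lemma incl_po: "partial_order (incl_order S)"
  unfolding incl_order_def by unfold_locales auto

lemma lub_unique: assumes a: "ilub S A s" and b: "ilub S A s'" shows "s = s'"
proof (rule subset_antisym)
  have a1: "s \<in> S" "\<forall>a\<in>A. a \<subseteq> s" "\<forall>u\<in>S. (\<forall>a\<in>A. a \<subseteq> u) \<longrightarrow> s \<subseteq> u" using a unfolding ilub_def by simp_all
  have b1: "s' \<in> S" "\<forall>a\<in>A. a \<subseteq> s'" "\<forall>u\<in>S. (\<forall>a\<in>A. a \<subseteq> u) \<longrightarrow> s' \<subseteq> u" using b unfolding ilub_def by simp_all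
  show "s \<subseteq> s'" using a1(3) b1(1,2) by simp
  show "s' \<subseteq> s" using b1(3) a1(1,2) by simp
qed

lemma glb_unique: assumes a: "iglb S A s" and b: "iglb S A s'" shows "s = s'"
proof (rule subset_antisym)
  have a1: "s \<in> S" "\<forall>a\<in>A. s \<subseteq> a" "\<forall>u\<in>S. (\<forall>a\<in>A. u \<subseteq> a) \<longrightarrow> u \<subseteq> s" using a unfolding iglb_def by simp_all
  have b1: "s' \<in> S" "\<forall>a\<in>A. s' \<subseteq> a" "\<forall>u\<in>S. (\<forall>a\<in>A. u \<subseteq> a) \<longrightarrow> u \<subseteq> s'" using b unfolding iglb_def by simp_all
  show "s \<subseteq> s'" using b1(3) a1(1,2) by simp
  show "s' \<subseteq> s" using a1(3) b1(1,2) by simp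
qed

lemma Upper_incl: "A \<subseteq> S \<Longrightarrow> Upper (incl_order S) A = {u \<in> S. \<forall>a\<in>A. a \<subseteq> u}"
  unfolding Upper_def incl_order_def by auto

lemma Lower_incl: "A \<subseteq> S \<Longrightarrow> Lower (incl_order S) A = {u \<in> S. \<forall>a\<in>A. u \<subseteq> a}"
  unfolding Lower_def incl_order_def by auto

lemma least_Upper_iff: "A \<subseteq> S \<Longrightarrow> least (incl_order S) s (Upper (incl_order S) A) \<longleftrightarrow> ilub S A s"
  unfolding least_def ilub_def by (simp add: Upper_incl) (simp add: incl_order_def Ball_def imp_conjL)

lemma greatest_Lower_iff: "A \<subseteq> S \<Longrightarrow> greatest (incl_order S) s (Lower (incl_order S) A) \<longleftrightarrow> iglb S A s"
  unfolding greatest_def iglb_def by (simp add: Lower_incl) (simp add: incl_order_def Ball_def imp_conjL)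

lemma incl_sup_eq:
  assumes A: "A \<subseteq> S" and s: "ilub S A s"
  shows "\<Squnion>\<^bsub>incl_order S\<^esub> A = s"
proof -
  have l: "least (incl_order S) s (Upper (incl_order S) A)" using least_Upper_iff[OF A] s by simp
  show ?thesis unfolding sup_def
  proof (rule some_equality)
    show "least (incl_order S) s (Upper (incl_order S) A)" by (rule l)
  next
    fix y assume "least (incl_order S) y (Upper (incl_order S) A)"
    then have "ilub S A y" using least_Upper_iff[OF A] by simp
    then show "y = s" using lub_unique s by blast
  qed
qed

lemma incl_inf_eq:
  assumes A: "A \<subseteq> S" and s: "iglb S A s"
  shows "\<Sqinter>\<^bsub>incl_order S\<^esub> A = s"
proof -
  have l: "greatest (incl_order S) s (Lower (incl_order S) A)" using greatest_Lower_iff[OF A] s by simp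
  show ?thesis unfolding inf_def
  proof (rule some_equality)
    show "greatest (incl_order S) s (Lower (incl_order S) A)" by (rule l)
  next
    fix y assume "greatest (incl_order S) y (Lower (incl_order S) A)"
    then have "iglb S A y" using greatest_Lower_iff[OF A] by simp
    then show "y = s" using glb_unique s by blast
  qed
qed

lemma incl_meet_eq: "x \<in> S \<Longrightarrow> y \<in> S \<Longrightarrow> iglb S {x, y} s \<Longrightarrow> x \<sqinter>\<^bsub>incl_order S\<^esub> y = s"
  unfolding meet_def by (rule incl_inf_eq) auto

lemma incl_complete:
  assumes "\<And>A. A \<subseteq> S \<Longrightarrow> \<exists>s. ilub S A s" "\<And>A. A \<subseteq> S \<Longrightarrow> \<exists>s. iglb S A s"
  shows "complete_lattice (incl_order S)"
proof (rule partial_order.complete_latticeI[OF incl_po])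
  fix A assume A: "A \<subseteq> carrier (incl_order S)"
  then have A': "A \<subseteq> S" by (simp add: incl_order_def)
  obtain s where s: "ilub S A s" using assms(1)[OF A'] by blast
  then show "\<exists>s. least (incl_order S) s (Upper (incl_order S) A)"
    using least_Upper_iff[OF A'] by blast
  obtain i where i: "iglb S A i" using assms(2)[OF A'] by blast
  then show "\<exists>s. greatest (incl_order S) s (Lower (incl_order S) A)"
    using greatest_Lower_iff[OF A'] by blast
qed

lemma iso_lub:
  assumes f: "bij_betw f S T" and ord: "\<And>a b. a \<in> S \<Longrightarrow> b \<in> S \<Longrightarrow> a \<subseteq> b \<longleftrightarrow> f a \<subseteq> f b"
    and A: "A \<subseteq> S" and s: "ilub S A s"
  shows "ilub T (f ` A) (f s)"
proof -
  have sS: "s \<in> S" and ub: "\<And>a. a \<in> A \<Longrightarrow> a \<subseteq> s" and lst: "\<And>u. u \<in> S \<Longrightarrow> \<forall>a\<in>A. a \<subseteq> u \<Longrightarrow> s \<subseteq> u"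
    using s unfolding ilub_def by auto
  have 1: "f s \<in> T" using f sS bij_betw_apply by metis
  have 2: "\<forall>b\<in>f ` A. b \<subseteq> f s"
  proof
    fix b assume "b \<in> f ` A"
    then obtain a where a: "a \<in> A" "b = f a" by blast
    show "b \<subseteq> f s" using ord[of a s] a A sS ub[OF a(1)] by blast
  qed
  have 3: "\<forall>v\<in>T. (\<forall>b\<in>f ` A. b \<subseteq> v) \<longrightarrow> f s \<subseteq> v"
  proof (intro ballI impI)
    fix v assume v: "v \<in> T" and vb: "\<forall>b\<in>f ` A. b \<subseteq> v"
    have "v \<in> f ` S" using v f by (simp add: bij_betw_def)
    then obtain u where u: "u \<in> S" "v = f u" by blast
    have "\<forall>a\<in>A. a \<subseteq> u"
    proof
      fix a assume a: "a \<in> A"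
      have "f a \<subseteq> f u" using vb a u(2) by blast
      then show "a \<subseteq> u" using ord[of a u] a A u(1) by blast
    qed
    then have "s \<subseteq> u" using lst u(1) by blast
    then show "f s \<subseteq> v" using ord[of s u] sS u by blast
  qed
  show ?thesis unfolding ilub_def using 1 2 3 by blast
qed

lemma iso_glb:
  assumes f: "bij_betw f S T" and ord: "\<And>a b. a \<in> S \<Longrightarrow> b \<in> S \<Longrightarrow> a \<subseteq> b \<longleftrightarrow> f a \<subseteq> f b"
    and A: "A \<subseteq> S" and s: "iglb S A s"
  shows "iglb T (f ` A) (f s)"
proof -
  have sS: "s \<in> S" and lb: "\<And>a. a \<in> A \<Longrightarrow> s \<subseteq> a" and gst: "\<And>u. u \<in> S \<Longrightarrow> \<forall>a\<in>A. u \<subseteq> a \<Longrightarrow> u \<subseteq> s"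
    using s unfolding iglb_def by auto
  have 1: "f s \<in> T" using f sS bij_betw_apply by metis
  have 2: "\<forall>b\<in>f ` A. f s \<subseteq> b"
  proof
    fix b assume "b \<in> f ` A"
    then obtain a where a: "a \<in> A" "b = f a" by blast
    show "f s \<subseteq> b" using ord[of s a] a A sS lb[OF a(1)] by blast
  qed
  have 3: "\<forall>v\<in>T. (\<forall>b\<in>f ` A. v \<subseteq> b) \<longrightarrow> v \<subseteq> f s"
  proof (intro ballI impI)
    fix v assume v: "v \<in> T" and vb: "\<forall>b\<in>f ` A. v \<subseteq> b"
    have "v \<in> f ` S" using v f by (simp add: bij_betw_def)
    then obtain u where u: "u \<in> S" "v = f u" by blast
    have "\<forall>a\<in>A. u \<subseteq> a"
    proof
      fix a assume a: "a \<in> A"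
      have "f u \<subseteq> f a" using vb a u(2) by blast
      then show "u \<subseteq> a" using ord[of u a] a A u(1) by blast
    qed
    then have "u \<subseteq> s" using gst u(1) by blast
    then show "v \<subseteq> f s" using ord[of u s] sS u by blast
  qed
  show ?thesis unfolding iglb_def using 1 2 3 by blast
qed


locale LM =
  fixes R :: "'r ring" and M :: "('r,'a) module"
  assumes lm: "left_module R M"
begin

lemma agM: "abelian_group M" using lm by (simp add: left_module_def)
lemma ringR: "ring R" using lm by (simp add: left_module_def)

sublocale M: abelian_group M by (rule agM)

lemma smult_closed: "a \<in> carrier R \<Longrightarrow> x \<in> carrier M \<Longrightarrow> a \<odot>\<^bsub>M\<^esub> x \<in> carrier M"
  using lm by (simp add: left_module_def)
lemma smult_r_distr: "a \<in> carrier R \<Longrightarrow> x \<in> carrier M \<Longrightarrow> y \<in> carrier M \<Longrightarrow>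
   a \<odot>\<^bsub>M\<^esub> (x \<oplus>\<^bsub>M\<^esub> y) = a \<odot>\<^bsub>M\<^esub> x \<oplus>\<^bsub>M\<^esub> a \<odot>\<^bsub>M\<^esub> y"
  using lm by (simp add: left_module_def)
lemma smult_l_distr: "a \<in> carrier R \<Longrightarrow> b \<in> carrier R \<Longrightarrow> x \<in> carrier M \<Longrightarrow>
   (a \<oplus>\<^bsub>R\<^esub> b) \<odot>\<^bsub>M\<^esub> x = a \<odot>\<^bsub>M\<^esub> x \<oplus>\<^bsub>M\<^esub> b \<odot>\<^bsub>M\<^esub> x"
  using lm by (simp add: left_module_def)
lemma smult_assoc: "a \<in> carrier R \<Longrightarrow> b \<in> carrier R \<Longrightarrow> x \<in> carrier M \<Longrightarrow>
   (a \<otimes>\<^bsub>R\<^esub> b) \<odot>\<^bsub>M\<^esub> x = a \<odot>\<^bsub>M\<^esub> (b \<odot>\<^bsub>M\<^esub> x)"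
  using lm by (simp add: left_module_def)
lemma smult_one: "x \<in> carrier M \<Longrightarrow> \<one>\<^bsub>R\<^esub> \<odot>\<^bsub>M\<^esub> x = x"
  using lm by (simp add: left_module_def)

lemma carrier_submodule: "submodule (carrier M) R M"
  by (rule submoduleI') (auto intro: smult_closed)

lemma Inter_submodule:
  assumes "\<F> \<noteq> {}" "\<And>K. K \<in> \<F> \<Longrightarrow> submodule K R M"
  shows "submodule (\<Inter>\<F>) R M"
proof -
  from assms(1) obtain K0 where "K0 \<in> \<F>" by auto
  show ?thesis
  proof (rule submoduleI')
    show "\<Inter>\<F> \<subseteq> carrier M" using submoduleD(1)[OF assms(2)[OF \<open>K0 \<in> \<F>\<close>]] \<open>K0 \<in> \<F>\<close> by blast
    show "\<zero>\<^bsub>M\<^esub> \<in> \<Inter>\<F>" using submoduleD(2)[OF assms(2)] by blast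
    fix x y a assume x: "x \<in> \<Inter>\<F>"
    show "\<ominus>\<^bsub>M\<^esub> x \<in> \<Inter>\<F>" using submoduleD(4)[OF assms(2)] x by blast
    { assume y: "y \<in> \<Inter>\<F>"
      show "x \<oplus>\<^bsub>M\<^esub> y \<in> \<Inter>\<F>" using submoduleD(3)[OF assms(2)] x y by blast }
    { assume a: "a \<in> carrier R"
      show "a \<odot>\<^bsub>M\<^esub> x \<in> \<Inter>\<F>" using submoduleD(5)[OF assms(2) a] x by blast }
  qed
qed

lemma submod_sum_submodule:
  assumes "\<Union>S \<subseteq> carrier M"
  shows "submodule (submod_sum R M S) R M"
  unfolding submod_sum_def
  by (rule Inter_submodule) (use carrier_submodule assms in auto)

lemma submod_sum_upper: "\<Union>S \<subseteq> carrier M \<Longrightarrow> X \<in> S \<Longrightarrow> X \<subseteq> submod_sum R M S"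
  unfolding submod_sum_def using carrier_submodule by auto

lemma submod_sum_least: "submodule K R M \<Longrightarrow> \<Union>S \<subseteq> K \<Longrightarrow> submod_sum R M S \<subseteq> K"
  unfolding submod_sum_def by auto

lemma hom_closed: "f \<in> mod_hom R M M \<Longrightarrow> x \<in> carrier M \<Longrightarrow> f x \<in> carrier M"
  unfolding mod_hom_def by auto
lemma hom_add: "f \<in> mod_hom R M M \<Longrightarrow> x \<in> carrier M \<Longrightarrow> y \<in> carrier M \<Longrightarrow> f (x \<oplus>\<^bsub>M\<^esub> y) = f x \<oplus>\<^bsub>M\<^esub> f y"
  unfolding mod_hom_def by auto
lemma hom_smult: "f \<in> mod_hom R M M \<Longrightarrow> a \<in> carrier R \<Longrightarrow> x \<in> carrier M \<Longrightarrow> f (a \<odot>\<^bsub>M\<^esub> x) = a \<odot>\<^bsub>M\<^esub> f x"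
  unfolding mod_hom_def by auto
lemma hom_zero: assumes "f \<in> mod_hom R M M" shows "f \<zero>\<^bsub>M\<^esub> = \<zero>\<^bsub>M\<^esub>"
proof -
  have "f \<zero>\<^bsub>M\<^esub> \<oplus>\<^bsub>M\<^esub> f \<zero>\<^bsub>M\<^esub> = f \<zero>\<^bsub>M\<^esub> \<oplus>\<^bsub>M\<^esub> \<zero>\<^bsub>M\<^esub>"
    using hom_add[OF assms, of "\<zero>\<^bsub>M\<^esub>" "\<zero>\<^bsub>M\<^esub>"] hom_closed[OF assms] by simp
  then show ?thesis using hom_closed[OF assms] M.add.l_cancel_one[of "f \<zero>\<^bsub>M\<^esub>" "f \<zero>\<^bsub>M\<^esub>"] by simp
qed
lemma hom_neg: assumes "f \<in> mod_hom R M M" "x \<in> carrier M" shows "f (\<ominus>\<^bsub>M\<^esub> x) = \<ominus>\<^bsub>M\<^esub> f x"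
proof -
  have "f (\<ominus>\<^bsub>M\<^esub> x) \<oplus>\<^bsub>M\<^esub> f x = \<zero>\<^bsub>M\<^esub>"
    using hom_add[OF assms(1), of "\<ominus>\<^bsub>M\<^esub> x" x] assms hom_zero[OF assms(1)] by (simp add: M.l_neg)
  then show ?thesis using M.minus_equality assms hom_closed by (metis M.a_inv_closed)
qed

lemma hom_comp: "f \<in> mod_hom R M M \<Longrightarrow> g \<in> mod_hom R M M \<Longrightarrow> (f \<circ> g) \<in> mod_hom R M M"
  unfolding mod_hom_def by (auto simp: Pi_def)

lemma preimage_submodule:
  assumes f: "f \<in> mod_hom R M M" and T: "submodule T R M"
  shows "submodule {y \<in> carrier M. f y \<in> T} R M"
proof (rule submoduleI')
  note t = submoduleD[OF T]
  show "{y \<in> carrier M. f y \<in> T} \<subseteq> carrier M" by blast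
  show "\<zero>\<^bsub>M\<^esub> \<in> {y \<in> carrier M. f y \<in> T}" using hom_zero[OF f] t(2) by simp
  fix x y a assume x: "x \<in> {y \<in> carrier M. f y \<in> T}"
  show "\<ominus>\<^bsub>M\<^esub> x \<in> {y \<in> carrier M. f y \<in> T}" using x hom_neg[OF f] t(4) by simp
  { assume y: "y \<in> {y \<in> carrier M. f y \<in> T}"
    show "x \<oplus>\<^bsub>M\<^esub> y \<in> {y \<in> carrier M. f y \<in> T}" using x y hom_add[OF f] t(3) by simp }
  { assume a: "a \<in> carrier R"
    show "a \<odot>\<^bsub>M\<^esub> x \<in> {y \<in> carrier M. f y \<in> T}" using x a hom_smult[OF f] t(5) smult_closed by simp }
qed


lemma fiD: "fully_invariant R M N \<Longrightarrow> submodule N R M"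
  "fully_invariant R M N \<Longrightarrow> f \<in> mod_hom R M M \<Longrightarrow> x \<in> N \<Longrightarrow> f x \<in> N"
  "fully_invariant R M N \<Longrightarrow> N \<subseteq> carrier M"
  unfolding fully_invariant_def using submoduleD(1) by blast+

lemma fiI: "submodule N R M \<Longrightarrow> (\<And>f x. f \<in> mod_hom R M M \<Longrightarrow> x \<in> N \<Longrightarrow> f x \<in> N) \<Longrightarrow> fully_invariant R M N"
  unfolding fully_invariant_def by blast

lemma fi_carrier: "fully_invariant R M (carrier M)"
  by (rule fiI[OF carrier_submodule]) (rule hom_closed)

lemma fi_Inter: "\<F> \<noteq> {} \<Longrightarrow> (\<And>K. K \<in> \<F> \<Longrightarrow> fully_invariant R M K) \<Longrightarrow> fully_invariant R M (\<Inter>\<F>)"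
proof -
  assume ne: "\<F> \<noteq> {}" and fi: "\<And>K. K \<in> \<F> \<Longrightarrow> fully_invariant R M K"
  show ?thesis
  proof (rule fiI)
    show "submodule (\<Inter>\<F>) R M" by (rule Inter_submodule[OF ne fiD(1)[OF fi]])
    fix f x assume f: "f \<in> mod_hom R M M" and x: "x \<in> \<Inter>\<F>"
    show "f x \<in> \<Inter>\<F>"
    proof
      fix K assume K: "K \<in> \<F>"
      show "f x \<in> K" using fiD(2)[OF fi[OF K] f] x K by blast
    qed
  qed
qed

lemma fi_sum:
  assumes "\<And>K. K \<in> S \<Longrightarrow> fully_invariant R M K"
  shows "fully_invariant R M (submod_sum R M S)"
proof -
  have S: "\<Union>S \<subseteq> carrier M" using assms fiD(3) by blast
  note T = submod_sum_submodule[OF S]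
  show ?thesis
  proof (rule fiI[OF T])
    fix f x assume f: "f \<in> mod_hom R M M" and x: "x \<in> submod_sum R M S"
    have "submod_sum R M S \<subseteq> {y \<in> carrier M. f y \<in> submod_sum R M S}"
    proof (rule submod_sum_least[OF preimage_submodule[OF f T]])
      show "\<Union>S \<subseteq> {y \<in> carrier M. f y \<in> submod_sum R M S}"
        using S submod_sum_upper[OF S] assms fiD(2)[OF _ f] by blast
    qed
    then show "f x \<in> submod_sum R M S" using x by blast
  qed
qed

lemma hom_intoD: "f \<in> hom_into R M L \<Longrightarrow> f \<in> mod_hom R M M"
  "f \<in> hom_into R M L \<Longrightarrow> x \<in> carrier M \<Longrightarrow> f x \<in> L"
  unfolding hom_into_def by auto

lemma prodM_family_sub: "N \<subseteq> carrier M \<Longrightarrow> \<Union>{f ` N | f. f \<in> hom_into R M L} \<subseteq> carrier M"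
  using hom_intoD hom_closed by blast

lemma prodM_submodule: "N \<subseteq> carrier M \<Longrightarrow> submodule (prodM R M N L) R M"
  unfolding prodM_def by (rule submod_sum_submodule[OF prodM_family_sub])

lemma image_sub_prodM: "N \<subseteq> carrier M \<Longrightarrow> f \<in> hom_into R M L \<Longrightarrow> f ` N \<subseteq> prodM R M N L"
  unfolding prodM_def by (rule submod_sum_upper[OF prodM_family_sub]) auto

lemma prodM_sub: "N \<subseteq> carrier M \<Longrightarrow> submodule L R M \<Longrightarrow> prodM R M N L \<subseteq> L"
  unfolding prodM_def by (rule submod_sum_least) (use hom_intoD in blast)+

lemma prodM_subN: "fully_invariant R M N \<Longrightarrow> prodM R M N L \<subseteq> N"
  unfolding prodM_def by (rule submod_sum_least) (use hom_intoD fiD in blast)+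

lemma prodM_mono: "N \<subseteq> N' \<Longrightarrow> L \<subseteq> L' \<Longrightarrow> N' \<subseteq> carrier M \<Longrightarrow> prodM R M N L \<subseteq> prodM R M N' L'"
proof -
  assume a: "N \<subseteq> N'" "L \<subseteq> L'" "N' \<subseteq> carrier M"
  show ?thesis unfolding prodM_def[of R M N L]
  proof (rule submod_sum_least[OF prodM_submodule[OF a(3)]])
    show "\<Union>{f ` N | f. f \<in> hom_into R M L} \<subseteq> prodM R M N' L'"
    proof
      fix y assume "y \<in> \<Union>{f ` N | f. f \<in> hom_into R M L}"
      then obtain f n where f: "f \<in> hom_into R M L" and n: "n \<in> N" and y: "y = f n" by blast
      have "f \<in> hom_into R M L'" using f a(2) unfolding hom_into_def by auto
      then show "y \<in> prodM R M N' L'" using image_sub_prodM[OF a(3)] n a(1) y by blast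
    qed
  qed
qed

lemma prodM_fi:
  assumes N: "N \<subseteq> carrier M" and L: "fully_invariant R M L"
  shows "fully_invariant R M (prodM R M N L)"
proof (rule fiI[OF prodM_submodule[OF N]])
  fix g x assume g: "g \<in> mod_hom R M M" and x: "x \<in> prodM R M N L"
  have fam: "\<Union>{f ` N | f. f \<in> hom_into R M L} \<subseteq> {y \<in> carrier M. g y \<in> prodM R M N L}"
  proof
    fix y assume "y \<in> \<Union>{f ` N | f. f \<in> hom_into R M L}"
    then obtain f n where f: "f \<in> hom_into R M L" and n: "n \<in> N" and y: "y = f n" by blast
    have gf: "g \<circ> f \<in> hom_into R M L"
      using f g hom_comp fiD(2)[OF L g] unfolding hom_into_def by auto
    have "g (f n) \<in> prodM R M N L" using image_sub_prodM[OF N gf] n by auto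
    moreover have "f n \<in> carrier M" using f n N hom_intoD hom_closed by blast
    ultimately show "y \<in> {y \<in> carrier M. g y \<in> prodM R M N L}" using y by simp
  qed
  have "submod_sum R M {f ` N | f. f \<in> hom_into R M L} \<subseteq> {y \<in> carrier M. g y \<in> prodM R M N L}"
    by (rule submod_sum_least[OF preimage_submodule[OF g prodM_submodule[OF N]] fam])
  then show "g x \<in> prodM R M N L" using x unfolding prodM_def[of R M N L] by blast
qed

definition ssum :: "'a set \<Rightarrow> 'a set \<Rightarrow> 'a set" where
  "ssum P N = {p \<oplus>\<^bsub>M\<^esub> n | p n. p \<in> P \<and> n \<in> N}"

lemma ssum_submodule:
  assumes P: "submodule P R M" and N: "submodule N R M"
  shows "submodule (ssum P N) R M"
proof (rule submoduleI')
  note p = submoduleD[OF P] and n = submoduleD[OF N]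
  show "ssum P N \<subseteq> carrier M" unfolding ssum_def using p(1) n(1) by blast
  show "\<zero>\<^bsub>M\<^esub> \<in> ssum P N" unfolding ssum_def using p(2) n(2) by force
  fix x y assume x: "x \<in> ssum P N"
  then obtain a b where ab: "a \<in> P" "b \<in> N" "x = a \<oplus>\<^bsub>M\<^esub> b" unfolding ssum_def by blast
  have abc: "a \<in> carrier M" "b \<in> carrier M" using ab p(1) n(1) by auto
  have "\<ominus>\<^bsub>M\<^esub> x = \<ominus>\<^bsub>M\<^esub> a \<oplus>\<^bsub>M\<^esub> \<ominus>\<^bsub>M\<^esub> b"
    using ab abc M.minus_add by simp
  then show "\<ominus>\<^bsub>M\<^esub> x \<in> ssum P N" unfolding ssum_def using p(4) n(4) ab by blast
  { assume y: "y \<in> ssum P N"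
    then obtain c d where cd: "c \<in> P" "d \<in> N" "y = c \<oplus>\<^bsub>M\<^esub> d" unfolding ssum_def by blast
    have cdc: "c \<in> carrier M" "d \<in> carrier M" using cd p(1) n(1) by auto
    have "x \<oplus>\<^bsub>M\<^esub> y = (a \<oplus>\<^bsub>M\<^esub> c) \<oplus>\<^bsub>M\<^esub> (b \<oplus>\<^bsub>M\<^esub> d)"
      using ab cd abc cdc by (simp add: M.a_ac)
    then show "x \<oplus>\<^bsub>M\<^esub> y \<in> ssum P N" unfolding ssum_def using p(3) n(3) ab cd by blast }
  { fix r assume r: "r \<in> carrier R"
    have "r \<odot>\<^bsub>M\<^esub> x = r \<odot>\<^bsub>M\<^esub> a \<oplus>\<^bsub>M\<^esub> r \<odot>\<^bsub>M\<^esub> b" using ab abc r smult_r_distr by simp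
    then show "r \<odot>\<^bsub>M\<^esub> x \<in> ssum P N" unfolding ssum_def using p(5) n(5) ab r by blast }
qed

lemma ssum_fi:
  assumes P: "fully_invariant R M P" and N: "fully_invariant R M N"
  shows "fully_invariant R M (ssum P N)"
proof (rule fiI[OF ssum_submodule[OF fiD(1)[OF P] fiD(1)[OF N]]])
  fix f x assume f: "f \<in> mod_hom R M M" and "x \<in> ssum P N"
  then obtain a b where ab: "a \<in> P" "b \<in> N" "x = a \<oplus>\<^bsub>M\<^esub> b" unfolding ssum_def by blast
  have "f x = f a \<oplus>\<^bsub>M\<^esub> f b" using ab hom_add[OF f] fiD(3)[OF P] fiD(3)[OF N] by blast
  then show "f x \<in> ssum P N" unfolding ssum_def using fiD(2)[OF P f] fiD(2)[OF N f] ab by blast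
qed

lemma ssum_upper1: "submodule P R M \<Longrightarrow> submodule N R M \<Longrightarrow> P \<subseteq> ssum P N"
proof
  fix x assume P: "submodule P R M" and N: "submodule N R M" and x: "x \<in> P"
  have "x = x \<oplus>\<^bsub>M\<^esub> \<zero>\<^bsub>M\<^esub>" using x submoduleD(1)[OF P] by auto
  then show "x \<in> ssum P N" unfolding ssum_def using x submoduleD(2)[OF N] by blast
qed

lemma ssum_upper2: "submodule P R M \<Longrightarrow> submodule N R M \<Longrightarrow> N \<subseteq> ssum P N"
proof
  fix x assume P: "submodule P R M" and N: "submodule N R M" and x: "x \<in> N"
  have "x = \<zero>\<^bsub>M\<^esub> \<oplus>\<^bsub>M\<^esub> x" using x submoduleD(1)[OF N] by auto
  then show "x \<in> ssum P N" unfolding ssum_def using x submoduleD(2)[OF P] by blast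
qed

end

locale LMP = LM +
  assumes proj_lift: "\<lbrakk>submodule P R M; submodule L R M; f \<in> mod_hom R M M;
      f ` carrier M \<subseteq> {p \<oplus>\<^bsub>M\<^esub> l | p l. p \<in> P \<and> l \<in> L}\<rbrakk> \<Longrightarrow>
      \<exists>h\<in>mod_hom R M M. h ` carrier M \<subseteq> L \<and> (\<forall>x\<in>carrier M. f x \<ominus>\<^bsub>M\<^esub> h x \<in> P)"
begin

lemma minus_plus_cancel: "a \<in> carrier M \<Longrightarrow> b \<in> carrier M \<Longrightarrow> (a \<ominus>\<^bsub>M\<^esub> b) \<oplus>\<^bsub>M\<^esub> b = a"
  by (simp add: a_minus_def M.a_assoc M.l_neg)

lemma key_prod:
  assumes P: "fully_invariant R M P" and N: "fully_invariant R M N" and L: "fully_invariant R M L"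
    and NL: "prodM R M N L \<subseteq> P"
  shows "prodM R M (ssum P N) (ssum P L) \<subseteq> P"
  unfolding prodM_def[of R M "ssum P N"]
proof (rule submod_sum_least[OF fiD(1)[OF P]])
  show "\<Union>{f ` ssum P N | f. f \<in> hom_into R M (ssum P L)} \<subseteq> P"
  proof
    fix y assume "y \<in> \<Union>{f ` ssum P N | f. f \<in> hom_into R M (ssum P L)}"
    then obtain f z where f: "f \<in> hom_into R M (ssum P L)" and z: "z \<in> ssum P N" and y: "y = f z" by blast
    obtain p n where pn: "p \<in> P" "n \<in> N" "z = p \<oplus>\<^bsub>M\<^esub> n" using z unfolding ssum_def by blast
    have pc: "p \<in> carrier M" and nc: "n \<in> carrier M" using pn fiD(3)[OF P] fiD(3)[OF N] by auto
    have fh: "f \<in> mod_hom R M M" using f by (rule hom_intoD)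
    have fim: "f ` carrier M \<subseteq> {p \<oplus>\<^bsub>M\<^esub> l | p l. p \<in> P \<and> l \<in> L}"
      using hom_intoD(2)[OF f] unfolding ssum_def by blast
    obtain h where h: "h \<in> mod_hom R M M" "h ` carrier M \<subseteq> L" "\<forall>x\<in>carrier M. f x \<ominus>\<^bsub>M\<^esub> h x \<in> P"
      using proj_lift[OF fiD(1)[OF P] fiD(1)[OF L] fh fim] by blast
    have hL: "h \<in> hom_into R M L" using h(1,2) unfolding hom_into_def by blast
    have "h n \<in> prodM R M N L" using image_sub_prodM[OF fiD(3)[OF N] hL] pn(2) by blast
    then have hnP: "h n \<in> P" using NL by blast
    have fnP: "f n \<in> P"
    proof -
      have "f n = (f n \<ominus>\<^bsub>M\<^esub> h n) \<oplus>\<^bsub>M\<^esub> h n"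
        using minus_plus_cancel hom_closed[OF fh nc] hom_closed[OF h(1) nc] by simp
      then show ?thesis using submoduleD(3)[OF fiD(1)[OF P]] h(3) nc hnP by metis
    qed
    have fpP: "f p \<in> P" using fiD(2)[OF P fh pn(1)] .
    have "y = f p \<oplus>\<^bsub>M\<^esub> f n" using y pn(3) hom_add[OF fh pc nc] by simp
    then show "y \<in> P" using submoduleD(3)[OF fiD(1)[OF P] fpP fnP] by simp
  qed
qed

lemma exists_prime:
  assumes S: "semiprime_in R M S" and x: "x \<in> carrier M" "x \<notin> S"
  shows "\<exists>P. fully_invariant R M P \<and> P \<in> LgSpec R M \<and> S \<subseteq> P \<and> x \<notin> P"
proof -
  define cl where "cl y = \<Inter>{K. fully_invariant R M K \<and> y \<in> K}" for y
  have cl_fi: "fully_invariant R M (cl y)" if "y \<in> carrier M" for y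
    unfolding cl_def by (rule fi_Inter) (use fi_carrier that in auto)
  have cl_in: "y \<in> cl y" for y unfolding cl_def by blast
  have cl_least: "cl y \<subseteq> K" if "fully_invariant R M K" "y \<in> K" for y K
    unfolding cl_def using that by blast
  have fiS: "fully_invariant R M S" using S unfolding semiprime_in_def Lambda_fi_def by blast
  have semi: "\<And>K. fully_invariant R M K \<Longrightarrow> prodM R M K K \<subseteq> S \<Longrightarrow> K \<subseteq> S"
    using S unfolding semiprime_in_def Lambda_fi_def by blast
  have step: "\<exists>z. z \<in> prodM R M (cl y) (cl y) \<and> z \<notin> S" if "y \<in> carrier M" "y \<notin> S" for y
  proof -
    have "\<not> cl y \<subseteq> S" using cl_in that(2) by blast
    then have "\<not> prodM R M (cl y) (cl y) \<subseteq> S" using semi cl_fi[OF that(1)] by blast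
    then show ?thesis by blast
  qed
  define nxt where "nxt y = (SOME z. z \<in> prodM R M (cl y) (cl y) \<and> z \<notin> S)" for y
  define xs where "xs n = (nxt ^^ n) x" for n
  have xs0: "xs 0 = x" by (simp add: xs_def)
  have xs_Suc: "xs (Suc n) = nxt (xs n)" for n by (simp add: xs_def)
  have nxt_prop: "nxt y \<in> prodM R M (cl y) (cl y) \<and> nxt y \<notin> S" if "y \<in> carrier M" "y \<notin> S" for y
    unfolding nxt_def using someI_ex[OF step[OF that]] .
  have inv: "xs n \<in> carrier M \<and> xs n \<notin> S" for n
  proof (induction n)
    case 0 then show ?case using x xs0 by simp
  next
    case (Suc n)
    have "nxt (xs n) \<in> prodM R M (cl (xs n)) (cl (xs n))" "nxt (xs n) \<notin> S"
      using nxt_prop Suc by auto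
    moreover have "prodM R M (cl (xs n)) (cl (xs n)) \<subseteq> carrier M"
      using prodM_subN[OF cl_fi] fiD(3)[OF cl_fi] Suc by blast
    ultimately show ?case using xs_Suc by auto
  qed
  have nxt_in: "xs (Suc n) \<in> prodM R M (cl (xs n)) (cl (xs n))" for n
    using nxt_prop inv xs_Suc by auto
  have cl_dec: "cl (xs (Suc n)) \<subseteq> cl (xs n)" for n
    using cl_least[OF cl_fi[OF inv[THEN conjunct1]]] nxt_in prodM_subN[OF cl_fi[OF inv[THEN conjunct1]]]
    by blast
  have cl_mono: "i \<le> k \<Longrightarrow> cl (xs k) \<subseteq> cl (xs i)" for i k
    using lift_Suc_antimono_le[of "\<lambda>n. cl (xs n)", OF cl_dec] by blast
  define A where "A = {P. fully_invariant R M P \<and> S \<subseteq> P \<and> (\<forall>k. xs k \<notin> P)}"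
  have "\<exists>P\<in>A. \<forall>X\<in>A. P \<subseteq> X \<longrightarrow> X = P"
  proof (rule Zorn_Lemma2, intro ballI)
    fix C assume C: "C \<in> chains A"
    have CA: "C \<subseteq> A" using chainsD2[OF C] .
    show "\<exists>U\<in>A. \<forall>X\<in>C. X \<subseteq> U"
    proof (cases "C = {}")
      case True
      have "S \<in> A" unfolding A_def using fiS inv by blast
      then show ?thesis using True by blast
    next
      case False
      then obtain K0 where K0: "K0 \<in> C" by blast
      have Cfi: "fully_invariant R M K" if "K \<in> C" for K using CA that unfolding A_def by blast
      have sub: "submodule (\<Union>C) R M"
      proof (rule submoduleI')
        show "\<Union>C \<subseteq> carrier M" using fiD(3)[OF Cfi] by blast
        show "\<zero>\<^bsub>M\<^esub> \<in> \<Union>C" using submoduleD(2)[OF fiD(1)[OF Cfi[OF K0]]] K0 by blast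
        fix a b r assume a: "a \<in> \<Union>C"
        then obtain K1 where K1: "K1 \<in> C" "a \<in> K1" by blast
        show "\<ominus>\<^bsub>M\<^esub> a \<in> \<Union>C" using submoduleD(4)[OF fiD(1)[OF Cfi[OF K1(1)]] K1(2)] K1(1) by blast
        { assume r: "r \<in> carrier R"
          show "r \<odot>\<^bsub>M\<^esub> a \<in> \<Union>C" using submoduleD(5)[OF fiD(1)[OF Cfi[OF K1(1)]] r K1(2)] K1(1) by blast }
        { assume b: "b \<in> \<Union>C"
          then obtain K2 where K2: "K2 \<in> C" "b \<in> K2" by blast
          show "a \<oplus>\<^bsub>M\<^esub> b \<in> \<Union>C"
          proof (cases "K1 \<subseteq> K2")
            case True
            then show ?thesis using submoduleD(3)[OF fiD(1)[OF Cfi[OF K2(1)]]] K1 K2 by blast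
          next
            case False
            then have "K2 \<subseteq> K1" using chainsD[OF C K1(1) K2(1)] by blast
            then show ?thesis using submoduleD(3)[OF fiD(1)[OF Cfi[OF K1(1)]]] K1 K2 by blast
          qed }
      qed
      have "fully_invariant R M (\<Union>C)"
      proof (rule fiI[OF sub])
        fix f a assume f: "f \<in> mod_hom R M M" and a: "a \<in> \<Union>C"
        then obtain K1 where K1: "K1 \<in> C" "a \<in> K1" by blast
        show "f a \<in> \<Union>C" using fiD(2)[OF Cfi[OF K1(1)] f K1(2)] K1(1) by blast
      qed
      moreover have "S \<subseteq> \<Union>C" using CA K0 unfolding A_def by blast
      moreover have "\<forall>k. xs k \<notin> \<Union>C" using CA unfolding A_def by blast
      ultimately have "\<Union>C \<in> A" unfolding A_def by blast
      then show ?thesis by blast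
    qed
  qed
  then obtain P where PA: "P \<in> A" and max: "\<And>X. X \<in> A \<Longrightarrow> P \<subseteq> X \<Longrightarrow> X = P" by blast
  have Pfi: "fully_invariant R M P" and SP: "S \<subseteq> P" and Pxs: "\<And>k. xs k \<notin> P"
    using PA unfolding A_def by auto
  have escape: "\<exists>i. xs i \<in> ssum P N" if N: "fully_invariant R M N" and NP: "\<not> N \<subseteq> P" for N
  proof (rule ccontr)
    assume "\<nexists>i. xs i \<in> ssum P N"
    moreover have "fully_invariant R M (ssum P N)" by (rule ssum_fi[OF Pfi N])
    moreover have "P \<subseteq> ssum P N" by (rule ssum_upper1[OF fiD(1)[OF Pfi] fiD(1)[OF N]])
    ultimately have "ssum P N \<in> A" "P \<subseteq> ssum P N" using SP unfolding A_def by auto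
    then have "ssum P N = P" using max by blast
    then show False using NP ssum_upper2[OF fiD(1)[OF Pfi] fiD(1)[OF N]] by blast
  qed
  have prime: "N \<subseteq> P \<or> L \<subseteq> P" if N: "N \<in> Lambda_fi R M" and L: "L \<in> Lambda_fi R M"
      and NL: "prodM R M N L \<subseteq> P" for N L
  proof (rule ccontr)
    assume "\<not> (N \<subseteq> P \<or> L \<subseteq> P)"
    then have nN: "\<not> N \<subseteq> P" and nL: "\<not> L \<subseteq> P" by auto
    have Nfi: "fully_invariant R M N" and Lfi: "fully_invariant R M L" using N L unfolding Lambda_fi_def by auto
    obtain i where i: "xs i \<in> ssum P N" using escape[OF Nfi nN] by blast
    obtain j where j: "xs j \<in> ssum P L" using escape[OF Lfi nL] by blast
    define k where "k = max i j"
    have c1: "cl (xs k) \<subseteq> ssum P N"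
      using cl_mono[of i k] cl_least[OF ssum_fi[OF Pfi Nfi] i] unfolding k_def by auto
    have c2: "cl (xs k) \<subseteq> ssum P L"
      using cl_mono[of j k] cl_least[OF ssum_fi[OF Pfi Lfi] j] unfolding k_def by auto
    have "prodM R M (cl (xs k)) (cl (xs k)) \<subseteq> prodM R M (ssum P N) (ssum P L)"
      by (rule prodM_mono[OF c1 c2 fiD(3)[OF ssum_fi[OF Pfi Nfi]]])
    also have "\<dots> \<subseteq> P" by (rule key_prod[OF Pfi Nfi Lfi NL])
    finally show False using nxt_in[of k] Pxs[of "Suc k"] by blast
  qed
  have "P \<in> LgSpec R M"
    unfolding LgSpec_def using fiD(1)[OF Pfi] Pxs[of 0] xs0 x(1) prime by blast
  then show ?thesis using Pfi SP Pxs[of 0] xs0 by auto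
qed


end


definition encp :: "'a \<Rightarrow> 'a \<Rightarrow> ('a \<times> nat) set" where
  "encp x y = {(x, 0), (y, Suc 0)}"
definition dec1 :: "('a \<times> nat) set \<Rightarrow> 'a" where
  "dec1 s = (THE x. (x, 0) \<in> s)"
definition dec2 :: "('a \<times> nat) set \<Rightarrow> 'a" where
  "dec2 s = (THE y. (y, Suc 0) \<in> s)"

lemma dec1_enc [simp]: "dec1 (encp x y) = x"
  unfolding dec1_def encp_def by auto
lemma dec2_enc [simp]: "dec2 (encp x y) = y"
  unfolding dec2_def encp_def by auto
lemma enc_eq [simp]: "encp x y = encp x' y' \<longleftrightarrow> x = x' \<and> y = y'"
  by (metis dec1_enc dec2_enc)

definition DM :: "('r, 'a) module \<Rightarrow> ('r, ('a \<times> nat) set) module" where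
  "DM M = \<lparr>carrier = {encp x y | x y. x \<in> carrier M \<and> y \<in> carrier M},
     monoid.mult = (\<lambda>a b. a), one = encp \<zero>\<^bsub>M\<^esub> \<zero>\<^bsub>M\<^esub>, zero = encp \<zero>\<^bsub>M\<^esub> \<zero>\<^bsub>M\<^esub>,
     add = (\<lambda>s t. encp (dec1 s \<oplus>\<^bsub>M\<^esub> dec1 t) (dec2 s \<oplus>\<^bsub>M\<^esub> dec2 t)),
     smult = (\<lambda>r s. encp (r \<odot>\<^bsub>M\<^esub> dec1 s) (r \<odot>\<^bsub>M\<^esub> dec2 s))\<rparr>"

lemma DM_carrier: "carrier (DM M) = {encp x y | x y. x \<in> carrier M \<and> y \<in> carrier M}"
  by (simp add: DM_def)
lemma DM_enc_in [simp]: "encp x y \<in> carrier (DM M) \<longleftrightarrow> x \<in> carrier M \<and> y \<in> carrier M"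
  by (simp add: DM_def)
lemma DM_zero [simp]: "\<zero>\<^bsub>DM M\<^esub> = encp \<zero>\<^bsub>M\<^esub> \<zero>\<^bsub>M\<^esub>"
  by (simp add: DM_def)
lemma DM_add [simp]: "encp a b \<oplus>\<^bsub>DM M\<^esub> encp c d = encp (a \<oplus>\<^bsub>M\<^esub> c) (b \<oplus>\<^bsub>M\<^esub> d)"
  by (simp add: DM_def)
lemma DM_smult [simp]: "r \<odot>\<^bsub>DM M\<^esub> encp a b = encp (r \<odot>\<^bsub>M\<^esub> a) (r \<odot>\<^bsub>M\<^esub> b)"
  by (simp add: DM_def)
lemma DM_elem: "s \<in> carrier (DM M) \<Longrightarrow> \<exists>x y. s = encp x y \<and> x \<in> carrier M \<and> y \<in> carrier M"
  by (simp add: DM_def)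

lemma restrict_left_module:
  fixes X :: "('r, 'b) module"
  assumes X: "left_module R X" and H: "submodule H R X"
  shows "left_module R (X\<lparr>carrier := H\<rparr>)"
proof -
  note h = submoduleD[OF H]
  have agX: "abelian_group X" and rR: "ring R" using X unfolding left_module_def by auto
  interpret X: abelian_group X by (rule agX)
  have ag: "abelian_group (X\<lparr>carrier := H\<rparr>)"
  proof (rule abelian_groupI)
    fix x y z assume x: "x \<in> carrier (X\<lparr>carrier := H\<rparr>)" and y: "y \<in> carrier (X\<lparr>carrier := H\<rparr>)"
      and z: "z \<in> carrier (X\<lparr>carrier := H\<rparr>)"
    have xc: "x \<in> carrier X" "y \<in> carrier X" "z \<in> carrier X" using x y z h(1) by auto
    show "x \<oplus>\<^bsub>X\<lparr>carrier := H\<rparr>\<^esub> y \<oplus>\<^bsub>X\<lparr>carrier := H\<rparr>\<^esub> z = x \<oplus>\<^bsub>X\<lparr>carrier := H\<rparr>\<^esub> (y \<oplus>\<^bsub>X\<lparr>carrier := H\<rparr>\<^esub> z)"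
      using xc by (simp add: X.a_assoc)
  next
    fix x y assume x: "x \<in> carrier (X\<lparr>carrier := H\<rparr>)" and y: "y \<in> carrier (X\<lparr>carrier := H\<rparr>)"
    have xc: "x \<in> carrier X" "y \<in> carrier X" using x y h(1) by auto
    show "x \<oplus>\<^bsub>X\<lparr>carrier := H\<rparr>\<^esub> y \<in> carrier (X\<lparr>carrier := H\<rparr>)" using x y h(3) by simp
    show "x \<oplus>\<^bsub>X\<lparr>carrier := H\<rparr>\<^esub> y = y \<oplus>\<^bsub>X\<lparr>carrier := H\<rparr>\<^esub> x" using xc by (simp add: X.a_comm)
  next
    show "\<zero>\<^bsub>X\<lparr>carrier := H\<rparr>\<^esub> \<in> carrier (X\<lparr>carrier := H\<rparr>)" using h(2) by simp
  next
    fix x assume x: "x \<in> carrier (X\<lparr>carrier := H\<rparr>)"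
    have xc: "x \<in> carrier X" using x h(1) by auto
    show "\<zero>\<^bsub>X\<lparr>carrier := H\<rparr>\<^esub> \<oplus>\<^bsub>X\<lparr>carrier := H\<rparr>\<^esub> x = x" using xc by simp
    show "\<exists>y\<in>carrier (X\<lparr>carrier := H\<rparr>). y \<oplus>\<^bsub>X\<lparr>carrier := H\<rparr>\<^esub> x = \<zero>\<^bsub>X\<lparr>carrier := H\<rparr>\<^esub>"
      using x xc h(4) X.l_neg by (intro bexI[of _ "\<ominus>\<^bsub>X\<^esub> x"]) auto
  qed
  show ?thesis
    unfolding left_module_def
    using ag rR X h(1,5) unfolding left_module_def by (simp add: subset_iff)
qed

lemma submod_sum_least_gen: "submodule K R X \<Longrightarrow> \<Union>S \<subseteq> K \<Longrightarrow> submod_sum R X S \<subseteq> K"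
  unfolding submod_sum_def by auto

context LM
begin

lemma smult_zero: assumes r: "r \<in> carrier R" shows "r \<odot>\<^bsub>M\<^esub> \<zero>\<^bsub>M\<^esub> = \<zero>\<^bsub>M\<^esub>"
proof -
  have "r \<odot>\<^bsub>M\<^esub> \<zero>\<^bsub>M\<^esub> \<oplus>\<^bsub>M\<^esub> r \<odot>\<^bsub>M\<^esub> \<zero>\<^bsub>M\<^esub> = r \<odot>\<^bsub>M\<^esub> \<zero>\<^bsub>M\<^esub>"
    using smult_r_distr[OF r, of "\<zero>\<^bsub>M\<^esub>" "\<zero>\<^bsub>M\<^esub>"] by simp
  then show ?thesis using M.add.l_cancel_one[of "r \<odot>\<^bsub>M\<^esub> \<zero>\<^bsub>M\<^esub>" "r \<odot>\<^bsub>M\<^esub> \<zero>\<^bsub>M\<^esub>"] smult_closed[OF r] by simp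
qed

lemma DM_left_module: "left_module R (DM M)"
proof -
  have ag: "abelian_group (DM M)"
  proof (rule abelian_groupI)
    fix x y z assume x: "x \<in> carrier (DM M)" and y: "y \<in> carrier (DM M)" and z: "z \<in> carrier (DM M)"
    obtain a b where ab: "x = encp a b" "a \<in> carrier M" "b \<in> carrier M" using DM_elem[OF x] by blast
    obtain c d where cd: "y = encp c d" "c \<in> carrier M" "d \<in> carrier M" using DM_elem[OF y] by blast
    obtain e g where eg: "z = encp e g" "e \<in> carrier M" "g \<in> carrier M" using DM_elem[OF z] by blast
    show "x \<oplus>\<^bsub>DM M\<^esub> y \<oplus>\<^bsub>DM M\<^esub> z = x \<oplus>\<^bsub>DM M\<^esub> (y \<oplus>\<^bsub>DM M\<^esub> z)"
      using ab cd eg by (simp add: M.a_assoc)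
  next
    fix x y assume x: "x \<in> carrier (DM M)" and y: "y \<in> carrier (DM M)"
    obtain a b where ab: "x = encp a b" "a \<in> carrier M" "b \<in> carrier M" using DM_elem[OF x] by blast
    obtain c d where cd: "y = encp c d" "c \<in> carrier M" "d \<in> carrier M" using DM_elem[OF y] by blast
    show "x \<oplus>\<^bsub>DM M\<^esub> y \<in> carrier (DM M)" using ab cd by simp
    show "x \<oplus>\<^bsub>DM M\<^esub> y = y \<oplus>\<^bsub>DM M\<^esub> x" using ab cd by (simp add: M.a_comm)
  next
    show "\<zero>\<^bsub>DM M\<^esub> \<in> carrier (DM M)" by simp
  next
    fix x assume x: "x \<in> carrier (DM M)"
    obtain a b where ab: "x = encp a b" "a \<in> carrier M" "b \<in> carrier M" using DM_elem[OF x] by blast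
    show "\<zero>\<^bsub>DM M\<^esub> \<oplus>\<^bsub>DM M\<^esub> x = x" using ab by simp
    show "\<exists>y\<in>carrier (DM M). y \<oplus>\<^bsub>DM M\<^esub> x = \<zero>\<^bsub>DM M\<^esub>"
      using ab M.l_neg by (intro bexI[of _ "encp (\<ominus>\<^bsub>M\<^esub> a) (\<ominus>\<^bsub>M\<^esub> b)"]) auto
  qed
  have c1: "\<forall>r\<in>carrier R. \<forall>x\<in>carrier (DM M). r \<odot>\<^bsub>DM M\<^esub> x \<in> carrier (DM M)"
  proof (intro ballI)
    fix r x assume r: "r \<in> carrier R" and x: "x \<in> carrier (DM M)"
    obtain a b where ab: "x = encp a b" "a \<in> carrier M" "b \<in> carrier M" using DM_elem[OF x] by blast
    show "r \<odot>\<^bsub>DM M\<^esub> x \<in> carrier (DM M)" using ab r smult_closed by simp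
  qed
  have c2: "\<forall>r\<in>carrier R. \<forall>s\<in>carrier R. \<forall>x\<in>carrier (DM M).
      (r \<oplus>\<^bsub>R\<^esub> s) \<odot>\<^bsub>DM M\<^esub> x = r \<odot>\<^bsub>DM M\<^esub> x \<oplus>\<^bsub>DM M\<^esub> s \<odot>\<^bsub>DM M\<^esub> x"
  proof (intro ballI)
    fix r s x assume r: "r \<in> carrier R" and s: "s \<in> carrier R" and x: "x \<in> carrier (DM M)"
    obtain a b where ab: "x = encp a b" "a \<in> carrier M" "b \<in> carrier M" using DM_elem[OF x] by blast
    show "(r \<oplus>\<^bsub>R\<^esub> s) \<odot>\<^bsub>DM M\<^esub> x = r \<odot>\<^bsub>DM M\<^esub> x \<oplus>\<^bsub>DM M\<^esub> s \<odot>\<^bsub>DM M\<^esub> x"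
      using ab r s smult_l_distr by simp
  qed
  have c3: "\<forall>r\<in>carrier R. \<forall>x\<in>carrier (DM M). \<forall>y\<in>carrier (DM M).
      r \<odot>\<^bsub>DM M\<^esub> (x \<oplus>\<^bsub>DM M\<^esub> y) = r \<odot>\<^bsub>DM M\<^esub> x \<oplus>\<^bsub>DM M\<^esub> r \<odot>\<^bsub>DM M\<^esub> y"
  proof (intro ballI)
    fix r x y assume r: "r \<in> carrier R" and x: "x \<in> carrier (DM M)" and y: "y \<in> carrier (DM M)"
    obtain a b where ab: "x = encp a b" "a \<in> carrier M" "b \<in> carrier M" using DM_elem[OF x] by blast
    obtain c d where cd: "y = encp c d" "c \<in> carrier M" "d \<in> carrier M" using DM_elem[OF y] by blast
    show "r \<odot>\<^bsub>DM M\<^esub> (x \<oplus>\<^bsub>DM M\<^esub> y) = r \<odot>\<^bsub>DM M\<^esub> x \<oplus>\<^bsub>DM M\<^esub> r \<odot>\<^bsub>DM M\<^esub> y"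
      using ab cd r smult_r_distr by simp
  qed
  have c4: "\<forall>r\<in>carrier R. \<forall>s\<in>carrier R. \<forall>x\<in>carrier (DM M).
      (r \<otimes>\<^bsub>R\<^esub> s) \<odot>\<^bsub>DM M\<^esub> x = r \<odot>\<^bsub>DM M\<^esub> (s \<odot>\<^bsub>DM M\<^esub> x)"
  proof (intro ballI)
    fix r s x assume r: "r \<in> carrier R" and s: "s \<in> carrier R" and x: "x \<in> carrier (DM M)"
    obtain a b where ab: "x = encp a b" "a \<in> carrier M" "b \<in> carrier M" using DM_elem[OF x] by blast
    show "(r \<otimes>\<^bsub>R\<^esub> s) \<odot>\<^bsub>DM M\<^esub> x = r \<odot>\<^bsub>DM M\<^esub> (s \<odot>\<^bsub>DM M\<^esub> x)"
      using ab r s smult_assoc by simp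
  qed
  have c5: "\<forall>x\<in>carrier (DM M). \<one>\<^bsub>R\<^esub> \<odot>\<^bsub>DM M\<^esub> x = x"
  proof
    fix x assume x: "x \<in> carrier (DM M)"
    obtain a b where ab: "x = encp a b" "a \<in> carrier M" "b \<in> carrier M" using DM_elem[OF x] by blast
    show "\<one>\<^bsub>R\<^esub> \<odot>\<^bsub>DM M\<^esub> x = x" using ab smult_one by simp
  qed
  show ?thesis unfolding left_module_def using ringR ag c1 c2 c3 c4 c5 by blast
qed


lemma DM_neg: assumes a: "a \<in> carrier M" and b: "b \<in> carrier M"
  shows "\<ominus>\<^bsub>DM M\<^esub> encp a b = encp (\<ominus>\<^bsub>M\<^esub> a) (\<ominus>\<^bsub>M\<^esub> b)"
proof -
  have ag: "abelian_group (DM M)" using DM_left_module unfolding left_module_def by blast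
  interpret D: abelian_group "DM M" by (rule ag)
  show ?thesis
    by (rule D.minus_equality) (use a b M.l_neg in auto)
qed

lemma DM_generated: "generated_by R M (DM M)"
  unfolding generated_by_def
proof (intro conjI DM_left_module)
  let ?F = "{f ` carrier M | f. f \<in> mod_hom R M (DM M)}"
  have csub: "submodule (carrier (DM M)) R (DM M)"
  proof -
    have ag: "abelian_group (DM M)" using DM_left_module unfolding left_module_def by blast
    interpret D: abelian_group "DM M" by (rule ag)
    show ?thesis
      by (rule submoduleI') (use DM_left_module[unfolded left_module_def] in auto)
  qed
  show "carrier (DM M) = submod_sum R (DM M) ?F"
  proof
    show "submod_sum R (DM M) ?F \<subseteq> carrier (DM M)"
      by (rule submod_sum_least_gen[OF csub]) (auto simp: mod_hom_def Pi_def)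
    show "carrier (DM M) \<subseteq> submod_sum R (DM M) ?F"
    proof
      fix s assume s: "s \<in> carrier (DM M)"
      obtain x y where xy: "s = encp x y" "x \<in> carrier M" "y \<in> carrier M" using DM_elem[OF s] by blast
      have i1: "(\<lambda>z. encp z \<zero>\<^bsub>M\<^esub>) \<in> mod_hom R M (DM M)"
        unfolding mod_hom_def using smult_zero by (auto simp: Pi_def)
      have i2: "(\<lambda>z. encp \<zero>\<^bsub>M\<^esub> z) \<in> mod_hom R M (DM M)"
        unfolding mod_hom_def using smult_zero by (auto simp: Pi_def)
      show "s \<in> submod_sum R (DM M) ?F"
        unfolding submod_sum_def
      proof
        fix K assume K: "K \<in> {K. submodule K R (DM M) \<and> \<Union>?F \<subseteq> K}"
        then have Ks: "submodule K R (DM M)" and KF: "\<Union>?F \<subseteq> K" by auto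
        have "encp x \<zero>\<^bsub>M\<^esub> \<in> K" using KF i1 xy(2) by blast
        moreover have "encp \<zero>\<^bsub>M\<^esub> y \<in> K" using KF i2 xy(3) by blast
        ultimately have "encp x \<zero>\<^bsub>M\<^esub> \<oplus>\<^bsub>DM M\<^esub> encp \<zero>\<^bsub>M\<^esub> y \<in> K" by (rule submoduleD(3)[OF Ks])
        then show "s \<in> K" using xy by simp
      qed
    qed
  qed
qed

lemma in_sigma_sub:
  assumes H: "submodule H R (DM M)"
  shows "in_sigma R M ((DM M)\<lparr>carrier := H\<rparr>)"
  unfolding in_sigma_def
proof (intro conjI exI bexI)
  show "left_module R ((DM M)\<lparr>carrier := H\<rparr>)" by (rule restrict_left_module[OF DM_left_module H])
  show "generated_by R M (DM M)" by (rule DM_generated)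
  show "id \<in> mod_hom R ((DM M)\<lparr>carrier := H\<rparr>) (DM M)"
    unfolding mod_hom_def using submoduleD(1)[OF H] by auto
  show "inj_on id (carrier ((DM M)\<lparr>carrier := H\<rparr>))" by simp
qed

lemma proj_lift_from:
  assumes pr: "projective_in_sigma R M TYPE(('a \<times> nat) set)"
    and P: "submodule P R M" and L: "submodule L R M" and f: "f \<in> mod_hom R M M"
    and fim: "f ` carrier M \<subseteq> {p \<oplus>\<^bsub>M\<^esub> l | p l. p \<in> P \<and> l \<in> L}"
  shows "\<exists>h\<in>mod_hom R M M. h ` carrier M \<subseteq> L \<and> (\<forall>x\<in>carrier M. f x \<ominus>\<^bsub>M\<^esub> h x \<in> P)"
proof -
  note p = submoduleD[OF P] and l = submoduleD[OF L]
  define PL where "PL = {p \<oplus>\<^bsub>M\<^esub> l | p l. p \<in> P \<and> l \<in> L}"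
  have PLs: "submodule PL R M" unfolding PL_def using ssum_submodule[OF P L] unfolding ssum_def .
  note pl = submoduleD[OF PLs]
  define HA where "HA = {encp p l | p l. p \<in> P \<and> l \<in> L}"
  define HB where "HB = {encp z \<zero>\<^bsub>M\<^esub> | z. z \<in> PL}"
  have HAs: "submodule HA R (DM M)"
  proof (rule submoduleI')
    show "HA \<subseteq> carrier (DM M)" unfolding HA_def using p(1) l(1) by auto
    show "\<zero>\<^bsub>DM M\<^esub> \<in> HA" unfolding HA_def using p(2) l(2) by auto
    fix x y r assume x: "x \<in> HA"
    then obtain a b where ab: "x = encp a b" "a \<in> P" "b \<in> L" unfolding HA_def by blast
    have abc: "a \<in> carrier M" "b \<in> carrier M" using ab p(1) l(1) by auto
    show "\<ominus>\<^bsub>DM M\<^esub> x \<in> HA" unfolding HA_def using ab abc DM_neg p(4) l(4) by auto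
    { assume y: "y \<in> HA"
      then obtain c d where cd: "y = encp c d" "c \<in> P" "d \<in> L" unfolding HA_def by blast
      show "x \<oplus>\<^bsub>DM M\<^esub> y \<in> HA" unfolding HA_def using ab cd p(3) l(3) by auto }
    { assume r: "r \<in> carrier R"
      show "r \<odot>\<^bsub>DM M\<^esub> x \<in> HA" unfolding HA_def using ab r p(5) l(5) by auto }
  qed
  have HBs: "submodule HB R (DM M)"
  proof (rule submoduleI')
    show "HB \<subseteq> carrier (DM M)" unfolding HB_def using pl(1) by auto
    show "\<zero>\<^bsub>DM M\<^esub> \<in> HB" unfolding HB_def using pl(2) by auto
    fix x y r assume x: "x \<in> HB"
    then obtain a where ab: "x = encp a \<zero>\<^bsub>M\<^esub>" "a \<in> PL" unfolding HB_def by blast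
    have abc: "a \<in> carrier M" using ab pl(1) by auto
    show "\<ominus>\<^bsub>DM M\<^esub> x \<in> HB" unfolding HB_def using ab abc DM_neg pl(4) by auto
    { assume y: "y \<in> HB"
      then obtain c where cd: "y = encp c \<zero>\<^bsub>M\<^esub>" "c \<in> PL" unfolding HB_def by blast
      show "x \<oplus>\<^bsub>DM M\<^esub> y \<in> HB" unfolding HB_def using ab cd pl(3) by auto }
    { assume r: "r \<in> carrier R"
      show "r \<odot>\<^bsub>DM M\<^esub> x \<in> HB" unfolding HB_def using ab r pl(5) smult_zero by auto }
  qed
  define A where "A = (DM M)\<lparr>carrier := HA\<rparr>"
  define B where "B = (DM M)\<lparr>carrier := HB\<rparr>"
  have sA: "in_sigma R M A" unfolding A_def by (rule in_sigma_sub[OF HAs])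
  have sB: "in_sigma R M B" unfolding B_def by (rule in_sigma_sub[OF HBs])
  define g where "g s = encp (dec1 s \<oplus>\<^bsub>M\<^esub> dec2 s) \<zero>\<^bsub>M\<^esub>" for s :: "('a \<times> nat) set"
  have HA_rep: "s = encp (dec1 s) (dec2 s) \<and> dec1 s \<in> P \<and> dec2 s \<in> L" if "s \<in> HA" for s
    using that unfolding HA_def by auto
  have g_hom: "g \<in> mod_hom R A B"
    unfolding mod_hom_def A_def B_def
  proof (intro CollectI conjI ballI)
    show "g \<in> carrier (DM M\<lparr>carrier := HA\<rparr>) \<rightarrow> carrier (DM M\<lparr>carrier := HB\<rparr>)"
      unfolding g_def HA_def HB_def PL_def by (auto intro!: exI)
    fix x y assume x: "x \<in> carrier (DM M\<lparr>carrier := HA\<rparr>)" and y: "y \<in> carrier (DM M\<lparr>carrier := HA\<rparr>)"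
    obtain a b where ab: "x = encp a b" "a \<in> P" "b \<in> L" using x unfolding HA_def by auto
    obtain c d where cd: "y = encp c d" "c \<in> P" "d \<in> L" using y unfolding HA_def by auto
    have abc: "a \<in> carrier M" "b \<in> carrier M" "c \<in> carrier M" "d \<in> carrier M" using ab cd p(1) l(1) by auto
    show "g (x \<oplus>\<^bsub>DM M\<lparr>carrier := HA\<rparr>\<^esub> y) = g x \<oplus>\<^bsub>DM M\<lparr>carrier := HB\<rparr>\<^esub> g y"
      unfolding g_def using ab cd abc by (simp add: M.a_ac)
  next
    fix r x assume r: "r \<in> carrier R" and x: "x \<in> carrier (DM M\<lparr>carrier := HA\<rparr>)"
    obtain a b where ab: "x = encp a b" "a \<in> P" "b \<in> L" using x unfolding HA_def by auto
    have abc: "a \<in> carrier M" "b \<in> carrier M" using ab p(1) l(1) by auto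
    show "g (r \<odot>\<^bsub>DM M\<lparr>carrier := HA\<rparr>\<^esub> x) = r \<odot>\<^bsub>DM M\<lparr>carrier := HB\<rparr>\<^esub> g x"
      unfolding g_def using ab abc r smult_r_distr smult_zero by simp
  qed
  have g_surj: "g ` carrier A = carrier B"
  proof
    show "g ` carrier A \<subseteq> carrier B" using g_hom unfolding mod_hom_def by auto
    show "carrier B \<subseteq> g ` carrier A"
    proof
      fix s assume "s \<in> carrier B"
      then obtain a b where ab: "s = encp (a \<oplus>\<^bsub>M\<^esub> b) \<zero>\<^bsub>M\<^esub>" "a \<in> P" "b \<in> L"
        unfolding B_def HB_def PL_def by auto
      have "encp a b \<in> carrier A" unfolding A_def HA_def using ab by auto
      moreover have "g (encp a b) = s" unfolding g_def using ab by simp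
      ultimately show "s \<in> g ` carrier A" by blast
    qed
  qed
  define f' where "f' x = encp (f x) \<zero>\<^bsub>M\<^esub>" for x
  have f'_hom: "f' \<in> mod_hom R M B"
    unfolding mod_hom_def B_def
  proof (intro CollectI conjI ballI)
    show "f' \<in> carrier M \<rightarrow> carrier (DM M\<lparr>carrier := HB\<rparr>)"
    proof (rule funcsetI)
      fix x assume x: "x \<in> carrier M"
      have "f x \<in> PL" using fim x unfolding PL_def by blast
      then show "f' x \<in> carrier (DM M\<lparr>carrier := HB\<rparr>)" unfolding f'_def HB_def by auto
    qed
    fix x y assume x: "x \<in> carrier M" and y: "y \<in> carrier M"
    show "f' (x \<oplus>\<^bsub>M\<^esub> y) = f' x \<oplus>\<^bsub>DM M\<lparr>carrier := HB\<rparr>\<^esub> f' y"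
      unfolding f'_def using hom_add[OF f x y] by simp
  next
    fix r x assume r: "r \<in> carrier R" and x: "x \<in> carrier M"
    show "f' (r \<odot>\<^bsub>M\<^esub> x) = r \<odot>\<^bsub>DM M\<lparr>carrier := HB\<rparr>\<^esub> f' x"
      unfolding f'_def using hom_smult[OF f r x] smult_zero[OF r] by simp
  qed
  obtain h where h: "h \<in> mod_hom R M A" and gh: "\<forall>x\<in>carrier M. g (h x) = f' x"
    using pr[unfolded projective_in_sigma_def, rule_format, OF sA sB g_hom g_surj f'_hom] by blast
  have hA: "h x \<in> HA" if "x \<in> carrier M" for x using h that unfolding mod_hom_def A_def by auto
  define h2 where "h2 x = dec2 (h x)" for x
  have h2L: "h2 x \<in> L" if "x \<in> carrier M" for x using HA_rep[OF hA[OF that]] unfolding h2_def by blast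
  have h2_hom: "h2 \<in> mod_hom R M M"
    unfolding mod_hom_def
  proof (intro CollectI conjI ballI)
    show "h2 \<in> carrier M \<rightarrow> carrier M" using h2L l(1) by auto
    fix x y assume x: "x \<in> carrier M" and y: "y \<in> carrier M"
    have "h (x \<oplus>\<^bsub>M\<^esub> y) = h x \<oplus>\<^bsub>A\<^esub> h y" using h x y unfolding mod_hom_def by auto
    also have "\<dots> = encp (dec1 (h x)) (dec2 (h x)) \<oplus>\<^bsub>DM M\<^esub> encp (dec1 (h y)) (dec2 (h y))"
      using HA_rep[OF hA[OF x]] HA_rep[OF hA[OF y]] unfolding A_def by simp
    finally show "h2 (x \<oplus>\<^bsub>M\<^esub> y) = h2 x \<oplus>\<^bsub>M\<^esub> h2 y" unfolding h2_def by simp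
  next
    fix r x assume r: "r \<in> carrier R" and x: "x \<in> carrier M"
    have "h (r \<odot>\<^bsub>M\<^esub> x) = r \<odot>\<^bsub>A\<^esub> h x" using h r x unfolding mod_hom_def by auto
    also have "\<dots> = r \<odot>\<^bsub>DM M\<^esub> encp (dec1 (h x)) (dec2 (h x))"
      using HA_rep[OF hA[OF x]] unfolding A_def by simp
    finally show "h2 (r \<odot>\<^bsub>M\<^esub> x) = r \<odot>\<^bsub>M\<^esub> h2 x" unfolding h2_def by simp
  qed
  have diff: "f x \<ominus>\<^bsub>M\<^esub> h2 x \<in> P" if x: "x \<in> carrier M" for x
  proof -
    note rep = HA_rep[OF hA[OF x]]
    have d: "dec1 (h x) \<in> carrier M" "dec2 (h x) \<in> carrier M" using rep p(1) l(1) by auto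
    have "g (h x) = f' x" using gh x by blast
    then have "f x = dec1 (h x) \<oplus>\<^bsub>M\<^esub> dec2 (h x)" unfolding g_def f'_def by simp
    then have "f x \<ominus>\<^bsub>M\<^esub> h2 x = dec1 (h x)"
      unfolding h2_def using d by (simp add: a_minus_def M.a_assoc M.r_neg)
    then show ?thesis using rep by simp
  qed
  show ?thesis using h2_hom h2L diff by blast
qed

end

context LM begin
lemma LgSpecD: "P \<in> LgSpec R M \<Longrightarrow> submodule P R M"
  "P \<in> LgSpec R M \<Longrightarrow> P \<noteq> carrier M"
  "P \<in> LgSpec R M \<Longrightarrow> P \<subseteq> carrier M"
  "P \<in> LgSpec R M \<Longrightarrow> N \<in> Lambda_fi R M \<Longrightarrow> L \<in> Lambda_fi R M \<Longrightarrow> prodM R M N L \<subseteq> P \<Longrightarrow> N \<subseteq> P \<or> L \<subseteq> P"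
  unfolding LgSpec_def using submoduleD(1) by blast+

lemma Lambda_fi_iff: "N \<in> Lambda_fi R M \<longleftrightarrow> fully_invariant R M N"
  by (simp add: Lambda_fi_def)

lemma U_meet:
  assumes N: "N \<in> Lambda_fi R M" and L: "L \<in> Lambda_fi R M"
  shows "Uopen R M N \<inter> Uopen R M L = Uopen R M (prodM R M N L)"
    and "prodM R M N L \<in> Lambda_fi R M"
proof -
  have Nfi: "fully_invariant R M N" and Lfi: "fully_invariant R M L" using N L Lambda_fi_iff by auto
  have s1: "prodM R M N L \<subseteq> N" by (rule prodM_subN[OF Nfi])
  have s2: "prodM R M N L \<subseteq> L" by (rule prodM_sub[OF fiD(3)[OF Nfi] fiD(1)[OF Lfi]])
  show "Uopen R M N \<inter> Uopen R M L = Uopen R M (prodM R M N L)"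
    unfolding Uopen_def using LgSpecD(4)[OF _ N L] s1 s2 by blast
  show "prodM R M N L \<in> Lambda_fi R M" using prodM_fi[OF fiD(3)[OF Nfi] Lfi] Lambda_fi_iff by blast
qed

lemma U_sup:
  assumes NN: "\<N> \<subseteq> Lambda_fi R M"
  shows "\<Union>(Uopen R M ` \<N>) = Uopen R M (submod_sum R M \<N>)"
    and "submod_sum R M \<N> \<in> Lambda_fi R M"
proof -
  have fi: "\<And>K. K \<in> \<N> \<Longrightarrow> fully_invariant R M K" using NN Lambda_fi_iff by blast
  have S: "\<Union>\<N> \<subseteq> carrier M" using fi fiD(3) by blast
  show "submod_sum R M \<N> \<in> Lambda_fi R M" using fi_sum[OF fi] Lambda_fi_iff by blast
  show "\<Union>(Uopen R M ` \<N>) = Uopen R M (submod_sum R M \<N>)"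
  proof
    show "\<Union>(Uopen R M ` \<N>) \<subseteq> Uopen R M (submod_sum R M \<N>)"
      unfolding Uopen_def using submod_sum_upper[OF S] by blast
    show "Uopen R M (submod_sum R M \<N>) \<subseteq> \<Union>(Uopen R M ` \<N>)"
    proof
      fix P assume P: "P \<in> Uopen R M (submod_sum R M \<N>)"
      then have PL: "P \<in> LgSpec R M" and nP: "\<not> submod_sum R M \<N> \<subseteq> P" unfolding Uopen_def by auto
      have "\<not> \<Union>\<N> \<subseteq> P" using nP submod_sum_least[OF LgSpecD(1)[OF PL]] by blast
      then obtain N where "N \<in> \<N>" "\<not> N \<subseteq> P" by blast
      then show "P \<in> \<Union>(Uopen R M ` \<N>)" using PL unfolding Uopen_def by blast
    qed
  qed
qed

lemma U_top: "Uopen R M (carrier M) = LgSpec R M"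
  unfolding Uopen_def using LgSpecD(2,3) by blast

lemma opens_sub: "U \<in> LgOpens R M \<Longrightarrow> U \<subseteq> LgSpec R M"
  unfolding LgOpens_def Uopen_def by blast

lemma opens_Int: "U \<in> LgOpens R M \<Longrightarrow> V \<in> LgOpens R M \<Longrightarrow> U \<inter> V \<in> LgOpens R M"
proof -
  assume "U \<in> LgOpens R M" "V \<in> LgOpens R M"
  then obtain N L where N: "N \<in> Lambda_fi R M" "U = Uopen R M N" and L: "L \<in> Lambda_fi R M" "V = Uopen R M L"
    unfolding LgOpens_def by blast
  show ?thesis using U_meet[OF N(1) L(1)] N(2) L(2) unfolding LgOpens_def by blast
qed

lemma opens_Union: "\<K> \<subseteq> LgOpens R M \<Longrightarrow> \<Union>\<K> \<in> LgOpens R M"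
proof -
  assume K: "\<K> \<subseteq> LgOpens R M"
  define \<N> where "\<N> = {N \<in> Lambda_fi R M. Uopen R M N \<in> \<K>}"
  have "\<K> = Uopen R M ` \<N>" using K unfolding \<N>_def LgOpens_def by blast
  then have "\<Union>\<K> = Uopen R M (submod_sum R M \<N>)" using U_sup(1)[of \<N>] unfolding \<N>_def by auto
  moreover have "submod_sum R M \<N> \<in> Lambda_fi R M" using U_sup(2)[of \<N>] unfolding \<N>_def by auto
  ultimately show ?thesis unfolding LgOpens_def by blast
qed

lemma opens_top: "LgSpec R M \<in> LgOpens R M"
  using U_top fi_carrier Lambda_fi_iff unfolding LgOpens_def by blast

lemma opens_istopology: "istopology (\<lambda>U. U \<in> LgOpens R M)"
  unfolding istopology_def using opens_Int opens_Union by blast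

lemma opens_lub: "A \<subseteq> LgOpens R M \<Longrightarrow> ilub (LgOpens R M) A (\<Union>A)"
  unfolding ilub_def using opens_Union by blast

lemma opens_glb: "A \<subseteq> LgOpens R M \<Longrightarrow> iglb (LgOpens R M) A (\<Union>{U \<in> LgOpens R M. \<forall>a\<in>A. U \<subseteq> a})"
  unfolding iglb_def using opens_Union[of "{U \<in> LgOpens R M. \<forall>a\<in>A. U \<subseteq> a}"] by blast

lemma opens_glb2: "U \<in> LgOpens R M \<Longrightarrow> V \<in> LgOpens R M \<Longrightarrow> iglb (LgOpens R M) {U, V} (U \<inter> V)"
  unfolding iglb_def using opens_Int by blast

lemma opens_complete: "complete_lattice (incl_order (LgOpens R M))"
  by (rule incl_complete) (use opens_lub opens_glb in blast)+

lemma opens_frame: "frame (incl_order (LgOpens R M))"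
  unfolding frame_def
proof (intro conjI opens_complete allI ballI impI)
  fix x A assume x: "x \<in> carrier (incl_order (LgOpens R M))" and A: "A \<subseteq> carrier (incl_order (LgOpens R M))"
  have x': "x \<in> LgOpens R M" and A': "A \<subseteq> LgOpens R M" using x A by (auto simp: incl_order_def)
  have supA: "\<Squnion>\<^bsub>incl_order (LgOpens R M)\<^esub> A = \<Union>A" by (rule incl_sup_eq[OF A' opens_lub[OF A']])
  have mt: "x \<sqinter>\<^bsub>incl_order (LgOpens R M)\<^esub> y = x \<inter> y" if "y \<in> LgOpens R M" for y
    by (rule incl_meet_eq[OF x' that opens_glb2[OF x' that]])
  have UA: "\<Union>A \<in> LgOpens R M" using opens_Union[OF A'] .
  have B: "(\<lambda>a. x \<sqinter>\<^bsub>incl_order (LgOpens R M)\<^esub> a) ` A = (\<lambda>a. x \<inter> a) ` A" using mt A' by auto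
  have B': "(\<lambda>a. x \<inter> a) ` A \<subseteq> LgOpens R M" using opens_Int x' A' by blast
  show "x \<sqinter>\<^bsub>incl_order (LgOpens R M)\<^esub> \<Squnion>\<^bsub>incl_order (LgOpens R M)\<^esub>A =
        \<Squnion>\<^bsub>incl_order (LgOpens R M)\<^esub>((\<lambda>a. x \<sqinter>\<^bsub>incl_order (LgOpens R M)\<^esub> a) ` A)"
    unfolding supA mt[OF UA] B incl_sup_eq[OF B' opens_lub[OF B']] by blast
qed

lemma SP_cases: "N \<in> SP R M \<Longrightarrow> N = carrier M \<or> semiprime_in R M N"
  unfolding SP_def by blast

lemma SP_fi: "N \<in> SP R M \<Longrightarrow> fully_invariant R M N"
  unfolding SP_def semiprime_in_def Lambda_fi_def using fi_carrier by blast

lemma SP_Inter: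
  assumes F: "F \<subseteq> SP R M"
  shows "carrier M \<inter> \<Inter>F \<in> SP R M"
proof (cases "F \<subseteq> {carrier M}")
  case True
  then have "carrier M \<inter> \<Inter>F = carrier M" by blast
  then show ?thesis unfolding SP_def by blast
next
  case False
  then obtain N0 where N0: "N0 \<in> F" "N0 \<noteq> carrier M" by blast
  have semi0: "semiprime_in R M N0" using SP_cases F N0 by blast
  have Fne: "F \<noteq> {}" using N0 by blast
  have eq: "carrier M \<inter> \<Inter>F = \<Inter>F" using F SP_fi fiD(3) Fne by blast
  have fi: "fully_invariant R M (\<Inter>F)" by (rule fi_Inter[OF Fne SP_fi]) (use F in blast)
  have ne: "\<Inter>F \<noteq> carrier M" using N0 fiD(3)[OF SP_fi] F by blast
  have "semiprime_in R M (\<Inter>F)"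
    unfolding semiprime_in_def
  proof (intro conjI ballI impI)
    show "\<Inter>F \<in> Lambda_fi R M" using fi Lambda_fi_iff by blast
    show "\<Inter>F \<noteq> carrier M" by (rule ne)
    fix K assume K: "K \<in> Lambda_fi R M" and KK: "prodM R M K K \<subseteq> \<Inter>F"
    show "K \<subseteq> \<Inter>F"
    proof
      fix y assume y: "y \<in> K"
      show "y \<in> \<Inter>F"
      proof
        fix N assume N: "N \<in> F"
        show "y \<in> N"
        proof (cases "N = carrier M")
          case True then show ?thesis using y K fiD(3) Lambda_fi_iff by blast
        next
          case False
          then have "semiprime_in R M N" using SP_cases F N by blast
          then have "K \<subseteq> N" using K KK N unfolding semiprime_in_def by blast
          then show ?thesis using y by blast
        qed
      qed
    qed
  qed
  then show ?thesis using eq unfolding SP_def by simp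
qed

lemma SP_lub: "A \<subseteq> SP R M \<Longrightarrow> ilub (SP R M) A (carrier M \<inter> \<Inter>{N \<in> SP R M. \<forall>a\<in>A. a \<subseteq> N})"
  unfolding ilub_def
proof (intro conjI ballI impI)
  assume A: "A \<subseteq> SP R M"
  show "carrier M \<inter> \<Inter>{N \<in> SP R M. \<forall>a\<in>A. a \<subseteq> N} \<in> SP R M" by (rule SP_Inter) blast
  show "a \<subseteq> carrier M \<inter> \<Inter>{N \<in> SP R M. \<forall>a\<in>A. a \<subseteq> N}" if "a \<in> A" for a
    using that A fiD(3)[OF SP_fi] by blast
  show "carrier M \<inter> \<Inter>{N \<in> SP R M. \<forall>a\<in>A. a \<subseteq> N} \<subseteq> u" if "u \<in> SP R M" "\<forall>a\<in>A. a \<subseteq> u" for u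
    using that by blast
qed

lemma SP_glb: "A \<subseteq> SP R M \<Longrightarrow> iglb (SP R M) A (carrier M \<inter> \<Inter>A)"
  unfolding iglb_def using SP_Inter[of A] fiD(3)[OF SP_fi] by blast

lemma SP_complete: "complete_lattice (incl_order (SP R M))"
  by (rule incl_complete) (use SP_lub SP_glb in blast)+

lemma SP_top: "carrier M \<in> SP R M" unfolding SP_def by blast

end

context LMP
begin

lemma U_order:
  assumes N: "N \<in> Lambda_fi R M" and N': "N' \<in> SP R M"
  shows "Uopen R M N \<subseteq> Uopen R M N' \<longleftrightarrow> N \<subseteq> N'"
proof
  assume "N \<subseteq> N'" then show "Uopen R M N \<subseteq> Uopen R M N'" unfolding Uopen_def by blast
next
  assume U: "Uopen R M N \<subseteq> Uopen R M N'"
  show "N \<subseteq> N'"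
  proof (cases "N' = carrier M")
    case True then show ?thesis using N fiD(3) Lambda_fi_iff by blast
  next
    case False
    then have semi: "semiprime_in R M N'" using SP_cases N' by blast
    show ?thesis
    proof
      fix y assume y: "y \<in> N"
      show "y \<in> N'"
      proof (rule ccontr)
        assume yN': "y \<notin> N'"
        have yc: "y \<in> carrier M" using y N fiD(3) Lambda_fi_iff by blast
        obtain P where P: "P \<in> LgSpec R M" "N' \<subseteq> P" "y \<notin> P" using exists_prime[OF semi yc yN'] by blast
        have "P \<in> Uopen R M N" using P y unfolding Uopen_def by blast
        then have "P \<in> Uopen R M N'" using U by blast
        then show False using P unfolding Uopen_def by blast
      qed
    qed
  qed
qed

lemma U_surj:
  assumes N: "N \<in> Lambda_fi R M"
  shows "\<exists>N'\<in>SP R M. Uopen R M N' = Uopen R M N"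
proof -
  have Nfi: "fully_invariant R M N" using N Lambda_fi_iff by blast
  define Q where "Q = {P \<in> LgSpec R M. P \<in> Lambda_fi R M \<and> N \<subseteq> P}"
  define N' where "N' = carrier M \<inter> \<Inter>Q"
  have QSP: "Q \<subseteq> SP R M"
  proof
    fix P assume P: "P \<in> Q"
    have "semiprime_in R M P" unfolding semiprime_in_def
    proof (intro conjI ballI impI)
      show "P \<in> Lambda_fi R M" "P \<noteq> carrier M" using P LgSpecD(2) unfolding Q_def by auto
      fix K assume "K \<in> Lambda_fi R M" "prodM R M K K \<subseteq> P"
      then show "K \<subseteq> P" using LgSpecD(4)[of P K K] P unfolding Q_def by blast
    qed
    then show "P \<in> SP R M" unfolding SP_def by blast
  qed
  have N'SP: "N' \<in> SP R M" unfolding N'_def by (rule SP_Inter[OF QSP])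
  have NN': "N \<subseteq> N'" unfolding N'_def Q_def using fiD(3)[OF Nfi] by blast
  have "Uopen R M N' = Uopen R M N"
  proof
    show "Uopen R M N \<subseteq> Uopen R M N'" using NN' unfolding Uopen_def by blast
    show "Uopen R M N' \<subseteq> Uopen R M N"
    proof
      fix P assume P: "P \<in> Uopen R M N'"
      then have PL: "P \<in> LgSpec R M" and nP: "\<not> N' \<subseteq> P" unfolding Uopen_def by auto
      show "P \<in> Uopen R M N"
      proof (rule ccontr)
        assume "P \<notin> Uopen R M N"
        then have NP: "N \<subseteq> P" using PL unfolding Uopen_def by blast
        define P'' where "P'' = submod_sum R M {K \<in> Lambda_fi R M. K \<subseteq> P}"
        have fam: "{K \<in> Lambda_fi R M. K \<subseteq> P} \<subseteq> Lambda_fi R M" by blast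
        have P''fi: "P'' \<in> Lambda_fi R M" unfolding P''_def by (rule U_sup(2)[OF fam])
        have famc: "\<Union>{K \<in> Lambda_fi R M. K \<subseteq> P} \<subseteq> carrier M" using LgSpecD(3)[OF PL] by blast
        have P''P: "P'' \<subseteq> P" unfolding P''_def by (rule submod_sum_least[OF LgSpecD(1)[OF PL]]) blast
        have upper: "K \<subseteq> P''" if "K \<in> Lambda_fi R M" "K \<subseteq> P" for K
          unfolding P''_def by (rule submod_sum_upper[OF famc]) (use that in blast)
        have "P'' \<in> LgSpec R M" unfolding LgSpec_def
        proof (intro CollectI conjI ballI impI)
          show "submodule P'' R M" using P''fi fiD(1) Lambda_fi_iff by blast
          show "P'' \<noteq> carrier M" using P''P LgSpecD(2,3)[OF PL] by blast
          fix K L assume K: "K \<in> Lambda_fi R M" and L: "L \<in> Lambda_fi R M" and KL: "prodM R M K L \<subseteq> P''"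
          then have "K \<subseteq> P \<or> L \<subseteq> P" using LgSpecD(4)[OF PL K L] P''P by blast
          then show "K \<subseteq> P'' \<or> L \<subseteq> P''" using upper K L by blast
        qed
        moreover have "N \<subseteq> P''" using upper N NP by blast
        ultimately have "P'' \<in> Q" using P''fi unfolding Q_def by blast
        then have "N' \<subseteq> P''" unfolding N'_def by blast
        then show False using nP P''P by blast
      qed
    qed
  qed
  then show ?thesis using N'SP by blast
qed

lemma U_bij: "bij_betw (Uopen R M) (SP R M) (LgOpens R M)"
proof (rule bij_betw_imageI)
  show "inj_on (Uopen R M) (SP R M)"
  proof (rule inj_onI)
    fix a b assume a: "a \<in> SP R M" and b: "b \<in> SP R M" and e: "Uopen R M a = Uopen R M b"
    have "a \<subseteq> b" using U_order[of a b] a b e SP_fi Lambda_fi_iff by blast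
    moreover have "b \<subseteq> a" using U_order[of b a] a b e SP_fi Lambda_fi_iff by blast
    ultimately show "a = b" by blast
  qed
  show "Uopen R M ` SP R M = LgOpens R M"
  proof
    show "Uopen R M ` SP R M \<subseteq> LgOpens R M" unfolding LgOpens_def using SP_fi Lambda_fi_iff by blast
    show "LgOpens R M \<subseteq> Uopen R M ` SP R M"
    proof
      fix U assume "U \<in> LgOpens R M"
      then obtain N where N: "N \<in> Lambda_fi R M" "U = Uopen R M N" unfolding LgOpens_def by blast
      obtain N' where N': "N' \<in> SP R M" "Uopen R M N' = Uopen R M N" using U_surj[OF N(1)] by blast
      show "U \<in> Uopen R M ` SP R M" using image_eqI[of U "Uopen R M" N' "SP R M"] N' N(2) by simp
    qed
  qed
qed

lemma U_ord: "a \<in> SP R M \<Longrightarrow> b \<in> SP R M \<Longrightarrow> a \<subseteq> b \<longleftrightarrow> Uopen R M a \<subseteq> Uopen R M b"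
  using U_order[of a b] SP_fi Lambda_fi_iff by blast

end


lemma incl_top: "t \<in> S \<Longrightarrow> (\<And>a. a \<in> S \<Longrightarrow> a \<subseteq> t) \<Longrightarrow> \<top>\<^bsub>incl_order S\<^esub> = t"
  unfolding top_def
proof (rule some_equality)
  assume t: "t \<in> S" and a: "\<And>a. a \<in> S \<Longrightarrow> a \<subseteq> t"
  show "greatest (incl_order S) t (carrier (incl_order S))"
    unfolding greatest_def incl_order_def using t a by simp
  fix y assume "greatest (incl_order S) y (carrier (incl_order S))"
  then have "y \<in> S" "\<And>z. z \<in> S \<Longrightarrow> z \<subseteq> y" unfolding greatest_def incl_order_def by simp_all
  then show "y = t" using t a by (simp add: subset_antisym)
qed

context LMP
begin

lemma carrier_incl: "carrier (incl_order S) = S" by (simp add: incl_order_def)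

lemma sup_transfer:
  assumes A: "A \<subseteq> SP R M"
  shows "\<Squnion>\<^bsub>incl_order (SP R M)\<^esub> A \<in> SP R M"
    and "Uopen R M (\<Squnion>\<^bsub>incl_order (SP R M)\<^esub> A) = \<Squnion>\<^bsub>incl_order (LgOpens R M)\<^esub> (Uopen R M ` A)"
proof -
  define s where "s = carrier M \<inter> \<Inter>{N \<in> SP R M. \<forall>a\<in>A. a \<subseteq> N}"
  have ls: "ilub (SP R M) A s" unfolding s_def by (rule SP_lub[OF A])
  have eq: "\<Squnion>\<^bsub>incl_order (SP R M)\<^esub> A = s" by (rule incl_sup_eq[OF A ls])
  show "\<Squnion>\<^bsub>incl_order (SP R M)\<^esub> A \<in> SP R M" using ls eq unfolding ilub_def by simp
  have lt: "ilub (LgOpens R M) (Uopen R M ` A) (Uopen R M s)"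
    by (rule iso_lub[OF U_bij U_ord A ls])
  have fA: "Uopen R M ` A \<subseteq> LgOpens R M" using A U_bij bij_betw_imp_surj_on by blast
  show "Uopen R M (\<Squnion>\<^bsub>incl_order (SP R M)\<^esub> A) = \<Squnion>\<^bsub>incl_order (LgOpens R M)\<^esub> (Uopen R M ` A)"
    unfolding eq using incl_sup_eq[OF fA lt] by simp
qed

lemma meet_transfer:
  assumes x: "x \<in> SP R M" and y: "y \<in> SP R M"
  shows "x \<sqinter>\<^bsub>incl_order (SP R M)\<^esub> y \<in> SP R M"
    and "Uopen R M (x \<sqinter>\<^bsub>incl_order (SP R M)\<^esub> y) = Uopen R M x \<sqinter>\<^bsub>incl_order (LgOpens R M)\<^esub> Uopen R M y"
proof -
  have A: "{x, y} \<subseteq> SP R M" using x y by simp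
  define s where "s = carrier M \<inter> \<Inter>{x, y}"
  have gs: "iglb (SP R M) {x, y} s" unfolding s_def by (rule SP_glb[OF A])
  have eq: "x \<sqinter>\<^bsub>incl_order (SP R M)\<^esub> y = s" by (rule incl_meet_eq[OF x y gs])
  show "x \<sqinter>\<^bsub>incl_order (SP R M)\<^esub> y \<in> SP R M" using gs eq unfolding iglb_def by simp
  have gt: "iglb (LgOpens R M) (Uopen R M ` {x, y}) (Uopen R M s)"
    by (rule iso_glb[OF U_bij U_ord A gs])
  have fx: "Uopen R M x \<in> LgOpens R M" "Uopen R M y \<in> LgOpens R M"
    using x y U_bij bij_betw_apply by metis+
  have gt': "iglb (LgOpens R M) {Uopen R M x, Uopen R M y} (Uopen R M s)" using gt by simp
  show "Uopen R M (x \<sqinter>\<^bsub>incl_order (SP R M)\<^esub> y) = Uopen R M x \<sqinter>\<^bsub>incl_order (LgOpens R M)\<^esub> Uopen R M y"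
    unfolding eq using incl_meet_eq[OF fx gt'] by simp
qed

lemma SP_frame: "frame (incl_order (SP R M))"
  unfolding frame_def
proof (intro conjI SP_complete allI ballI impI)
  fix x A assume x0: "x \<in> carrier (incl_order (SP R M))" and A0: "A \<subseteq> carrier (incl_order (SP R M))"
  have x: "x \<in> SP R M" and A: "A \<subseteq> SP R M" using x0 A0 by (simp_all add: carrier_incl)
  let ?L = "incl_order (SP R M)" and ?T = "incl_order (LgOpens R M)" and ?f = "Uopen R M"
  have sA: "\<Squnion>\<^bsub>?L\<^esub> A \<in> SP R M" by (rule sup_transfer(1)[OF A])
  have lhs_in: "x \<sqinter>\<^bsub>?L\<^esub> \<Squnion>\<^bsub>?L\<^esub> A \<in> SP R M" by (rule meet_transfer(1)[OF x sA])
  have B: "(\<lambda>a. x \<sqinter>\<^bsub>?L\<^esub> a) ` A \<subseteq> SP R M" using meet_transfer(1)[OF x] A by blast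
  have rhs_in: "\<Squnion>\<^bsub>?L\<^esub> ((\<lambda>a. x \<sqinter>\<^bsub>?L\<^esub> a) ` A) \<in> SP R M" by (rule sup_transfer(1)[OF B])
  have fx: "?f x \<in> LgOpens R M" using x U_bij bij_betw_apply by metis
  have fA: "?f ` A \<subseteq> LgOpens R M" using A U_bij bij_betw_imp_surj_on by blast
  have "?f (x \<sqinter>\<^bsub>?L\<^esub> \<Squnion>\<^bsub>?L\<^esub> A) = ?f x \<sqinter>\<^bsub>?T\<^esub> \<Squnion>\<^bsub>?T\<^esub> (?f ` A)"
    using meet_transfer(2)[OF x sA] sup_transfer(2)[OF A] by simp
  also have "\<dots> = \<Squnion>\<^bsub>?T\<^esub> ((\<lambda>b. ?f x \<sqinter>\<^bsub>?T\<^esub> b) ` (?f ` A))"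
    using opens_frame fx fA unfolding frame_def carrier_incl by blast
  also have "\<dots> = \<Squnion>\<^bsub>?T\<^esub> (?f ` ((\<lambda>a. x \<sqinter>\<^bsub>?L\<^esub> a) ` A))"
  proof -
    have "(\<lambda>b. ?f x \<sqinter>\<^bsub>?T\<^esub> b) ` (?f ` A) = ?f ` ((\<lambda>a. x \<sqinter>\<^bsub>?L\<^esub> a) ` A)"
    proof -
      have "(\<lambda>b. ?f x \<sqinter>\<^bsub>?T\<^esub> b) ` (?f ` A) = (\<lambda>a. ?f x \<sqinter>\<^bsub>?T\<^esub> ?f a) ` A" by (simp add: image_image)
      also have "\<dots> = (\<lambda>a. ?f (x \<sqinter>\<^bsub>?L\<^esub> a)) ` A"
        using meet_transfer(2)[OF x] A by (intro image_cong) auto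
      also have "\<dots> = ?f ` ((\<lambda>a. x \<sqinter>\<^bsub>?L\<^esub> a) ` A)" by (simp add: image_image)
      finally show ?thesis .
    qed
    then show ?thesis by simp
  qed
  also have "\<dots> = ?f (\<Squnion>\<^bsub>?L\<^esub> ((\<lambda>a. x \<sqinter>\<^bsub>?L\<^esub> a) ` A))"
    using sup_transfer(2)[OF B] by simp
  finally have "?f (x \<sqinter>\<^bsub>?L\<^esub> \<Squnion>\<^bsub>?L\<^esub> A) = ?f (\<Squnion>\<^bsub>?L\<^esub> ((\<lambda>a. x \<sqinter>\<^bsub>?L\<^esub> a) ` A))" .
  then show "x \<sqinter>\<^bsub>?L\<^esub> \<Squnion>\<^bsub>?L\<^esub> A = \<Squnion>\<^bsub>?L\<^esub> ((\<lambda>a. x \<sqinter>\<^bsub>?L\<^esub> a) ` A)"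
    using U_bij lhs_in rhs_in unfolding bij_betw_def inj_on_def by blast
qed

lemma main_result:
  "frame (incl_order (SP R M)) \<and>
   istopology (\<lambda>U. U \<in> LgOpens R M) \<and>
   frame_iso (incl_order (SP R M)) (incl_order (LgOpens R M)) (Uopen R M)"
proof (intro conjI)
  show F1: "frame (incl_order (SP R M))" by (rule SP_frame)
  show "istopology (\<lambda>U. U \<in> LgOpens R M)" by (rule opens_istopology)
  show "frame_iso (incl_order (SP R M)) (incl_order (LgOpens R M)) (Uopen R M)"
    unfolding frame_iso_def
  proof (intro conjI)
    show "frame (incl_order (SP R M))" by (rule F1)
    show "frame (incl_order (LgOpens R M))" by (rule opens_frame)
    show "bij_betw (Uopen R M) (carrier (incl_order (SP R M))) (carrier (incl_order (LgOpens R M)))"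
      unfolding carrier_incl by (rule U_bij)
    show "sup_pres (incl_order (SP R M)) (incl_order (LgOpens R M)) (Uopen R M)"
      unfolding sup_pres_def carrier_incl using SP_complete opens_complete sup_transfer(2) by blast
    show "meet_pres (incl_order (SP R M)) (incl_order (LgOpens R M)) (Uopen R M)"
      unfolding meet_pres_def carrier_incl using complete_lattice_lattice[OF SP_complete] complete_lattice_lattice[OF opens_complete]
        meet_transfer(2) by blast
    have t1: "\<top>\<^bsub>incl_order (SP R M)\<^esub> = carrier M"
      by (rule incl_top[OF SP_top]) (use SP_fi fiD(3) in blast)
    have t2: "\<top>\<^bsub>incl_order (LgOpens R M)\<^esub> = LgSpec R M"
      by (rule incl_top[OF opens_top]) (use opens_sub in blast)
    show "Uopen R M \<top>\<^bsub>incl_order (SP R M)\<^esub> = \<top>\<^bsub>incl_order (LgOpens R M)\<^esub>"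
      unfolding t1 t2 by (rule U_top)
  qed
qed

end

theorem proposition4p27:
  fixes R :: "'r ring" and M :: "('r, 'a) module"
  assumes "left_module R M"
    and "projective_in_sigma R M TYPE(('a \<times> nat) set)"
  shows "frame (incl_order (SP R M)) \<and>
         istopology (\<lambda>U. U \<in> LgOpens R M) \<and>
         frame_iso (incl_order (SP R M)) (incl_order (LgOpens R M)) (Uopen R M)"
proof -
  interpret LM R M by (rule LM.intro) (rule assms(1))
  have ax: "LMP_axioms R M"
    by (rule LMP_axioms.intro) (rule proj_lift_from[OF assms(2)])
  interpret LMP R M by (rule LMP.intro[OF LM.intro[OF assms(1)] ax])
  show ?thesis by (rule main_result)
qed

end
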